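(* Let $D$ be a division algebra and let $\sigma\in\mathrm{Aut}(D)$ be of infinite inner order. Then the tuple $(\sigma,\sigma^{-1})$ is not automorphically normalizable over $D$.
   Context: All rings are associative with unity. An automorphism $\sigma$ of $D$ has finite inner order if $\sigma^k$ is an inner automorphism $r\mapsto crc^{-1}$ ($c\in D^\times$) for some positive integer $k$; otherwise it has infinite inner order. For commuting automorphisms $\sigma_1,\ldots,\sigma_n$ of $D$, $D[t_1,\ldots,t_n;\sigma_1,\ldots,\sigma_n]$ is the skew polynomial ring in pairwise commuting variables with $t_ia=\sigma_i(a)t_i$ for $a\in D$. For a ring $S\supseteq D$, $a\in S$ is automorphic over $D$ with respect to $\tau$ if $ab=\tau(b)a$ for all $b\in D$. Commuting $a_1,\ldots,a_m\in S$ are (left) algebraically independent over $D$ if monomials in them are left linearly independent over $D$. $S$ is automorphically normalizable over $D$ if there exist $m\ge0$ and commuting $a_1,\ldots,a_m\in S$, automorphic over $D$ with respect to pairwise commuting automorphisms, left algebraically independent over $D$, such that $S$ is finitely generated as a left module over the subring $D[a_1,\ldots,a_m]$ generated by $D\cup\{a_1,\ldots,a_m\}$. A tuple $(\sigma_1,\ldots,\sigma_n)$ is automorphically normalizable over $D$ if every quotient of $D[t_1,\ldots,t_n;\sigma_1,\ldots,\sigma_n]$ by a proper two-sided ideal is automorphically normalizable over $D$. *)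

theory Defs
  imports Main "HOL-Algebra.Algebra"
begin

definition ring_aut :: "('a::division_ring \<Rightarrow> 'a) \<Rightarrow> bool" where
  "ring_aut f \<longleftrightarrow> bij f \<and> (\<forall>x y. f (x + y) = f x + f y) \<and>
     (\<forall>x y. f (x * y) = f x * f y) \<and> f 1 = 1"

definition inner_aut :: "('a::division_ring \<Rightarrow> 'a) \<Rightarrow> bool" where
  "inner_aut f \<longleftrightarrow> (\<exists>c. c \<noteq> 0 \<and> (\<forall>r. f r = c * r * inverse c))"

definition infinite_inner_order :: "('a::division_ring \<Rightarrow> 'a) \<Rightarrow> bool" where
  "infinite_inner_order f \<longleftrightarrow> (\<forall>k::nat. k > 0 \<longrightarrow> \<not> inner_aut (f ^^ k))"

definition exps :: "nat \<Rightarrow> (nat \<Rightarrow> nat) set" where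
  "exps n = {\<alpha>. \<forall>i\<ge>n. \<alpha> i = 0}"

definition sig_pow :: "('a \<Rightarrow> 'a) list \<Rightarrow> (nat \<Rightarrow> nat) \<Rightarrow> 'a \<Rightarrow> 'a" where
  "sig_pow \<sigma>s \<alpha> = foldr (\<lambda>i f. (\<sigma>s ! i ^^ \<alpha> i) \<circ> f) [0..<length \<sigma>s] id"

text \<open>A polynomial is the finitely supported coefficient function p, representing
  the sum of p(alpha) t^alpha with coefficients on the left; the multiplication
  is determined by t^alpha a = sigma^alpha(a) t^alpha and t^alpha t^beta = t^(alpha+beta).\<close>
definition skew_mult ::
  "('a::division_ring \<Rightarrow> 'a) list \<Rightarrow> ((nat \<Rightarrow> nat) \<Rightarrow> 'a) \<Rightarrow> ((nat \<Rightarrow> nat) \<Rightarrow> 'a) \<Rightarrow> (nat \<Rightarrow> nat) \<Rightarrow> 'a" where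
  "skew_mult \<sigma>s p q \<gamma> = (if \<gamma> \<in> exps (length \<sigma>s) then
      (\<Sum>\<alpha>\<in>{\<alpha>. \<alpha> \<le> \<gamma>}. p \<alpha> * sig_pow \<sigma>s \<alpha> (q (\<lambda>i. \<gamma> i - \<alpha> i)))
    else 0)"

definition skew_poly_ring ::
  "('a::division_ring \<Rightarrow> 'a) list \<Rightarrow> ((nat \<Rightarrow> nat) \<Rightarrow> 'a) ring" where
  "skew_poly_ring \<sigma>s = \<lparr>
     carrier = {p. finite {\<alpha>. p \<alpha> \<noteq> 0} \<and> (\<forall>\<alpha>. p \<alpha> \<noteq> 0 \<longrightarrow> \<alpha> \<in> exps (length \<sigma>s))},
     monoid.mult = skew_mult \<sigma>s,
     one = (\<lambda>\<alpha>. if \<alpha> = (\<lambda>_. 0) then 1 else 0),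
     ring.zero = (\<lambda>_. 0),
     ring.add = (\<lambda>p q \<alpha>. p \<alpha> + q \<alpha>) \<rparr>"

definition skew_const :: "'a::division_ring \<Rightarrow> (nat \<Rightarrow> nat) \<Rightarrow> 'a" where
  "skew_const d = (\<lambda>\<alpha>. if \<alpha> = (\<lambda>_. 0) then d else 0)"

definition monom_in :: "('b, 'c) ring_scheme \<Rightarrow> (nat \<Rightarrow> 'b) \<Rightarrow> nat \<Rightarrow> (nat \<Rightarrow> nat) \<Rightarrow> 'b" where
  "monom_in S a m \<beta> = foldr (\<lambda>i acc. (a i [^]\<^bsub>S\<^esub> \<beta> i) \<otimes>\<^bsub>S\<^esub> acc) [0..<m] \<one>\<^bsub>S\<^esub>"

definition automorphic_over :: "('b, 'c) ring_scheme \<Rightarrow> ('a \<Rightarrow> 'b) \<Rightarrow> 'b \<Rightarrow> ('a \<Rightarrow> 'a) \<Rightarrow> bool" where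
  "automorphic_over S \<iota> x \<tau> \<longleftrightarrow> (\<forall>b. x \<otimes>\<^bsub>S\<^esub> \<iota> b = \<iota> (\<tau> b) \<otimes>\<^bsub>S\<^esub> x)"

definition left_alg_indep :: "('b, 'c) ring_scheme \<Rightarrow> ('a::division_ring \<Rightarrow> 'b) \<Rightarrow> nat \<Rightarrow> (nat \<Rightarrow> 'b) \<Rightarrow> bool" where
  "left_alg_indep S \<iota> m a \<longleftrightarrow>
     (\<forall>B c. finite B \<and> B \<subseteq> exps m \<and>
        finsum S (\<lambda>\<beta>. \<iota> (c \<beta>) \<otimes>\<^bsub>S\<^esub> monom_in S a m \<beta>) B = \<zero>\<^bsub>S\<^esub>
        \<longrightarrow> (\<forall>\<beta>\<in>B. c \<beta> = 0))"

definition fin_gen_left_module :: "('b, 'c) ring_scheme \<Rightarrow> 'b set \<Rightarrow> bool" where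
  "fin_gen_left_module S A \<longleftrightarrow>
     (\<exists>G. finite G \<and> G \<subseteq> carrier S \<and>
        (\<forall>s\<in>carrier S. \<exists>c. (\<forall>g\<in>G. c g \<in> A) \<and> s = finsum S (\<lambda>g. c g \<otimes>\<^bsub>S\<^esub> g) G))"

definition aut_normalizable :: "('b, 'c) ring_scheme \<Rightarrow> ('a::division_ring \<Rightarrow> 'b) \<Rightarrow> bool" where
  "aut_normalizable S \<iota> \<longleftrightarrow>
     (\<exists>m a \<tau>. (\<forall>i<m. a i \<in> carrier S) \<and>
        (\<forall>i<m. \<forall>j<m. a i \<otimes>\<^bsub>S\<^esub> a j = a j \<otimes>\<^bsub>S\<^esub> a i) \<and>
        (\<forall>i<m. ring_aut (\<tau> i)) \<and>
        (\<forall>i<m. \<forall>j<m. \<tau> i \<circ> \<tau> j = \<tau> j \<circ> \<tau> i) \<and>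
        (\<forall>i<m. automorphic_over S \<iota> (a i) (\<tau> i)) \<and>
        left_alg_indep S \<iota> m a \<and>
        fin_gen_left_module S (generate_ring S (range \<iota> \<union> a ` {..<m})))"

definition tuple_aut_normalizable :: "('a::division_ring \<Rightarrow> 'a) list \<Rightarrow> bool" where
  "tuple_aut_normalizable \<sigma>s \<longleftrightarrow>
     (\<forall>I. ideal I (skew_poly_ring \<sigma>s) \<and> I \<noteq> carrier (skew_poly_ring \<sigma>s) \<longrightarrow>
        aut_normalizable (skew_poly_ring \<sigma>s Quot I)
          (\<lambda>d. I +>\<^bsub>skew_poly_ring \<sigma>s\<^esub> skew_const d))"

end

theory Submission
  imports Defs
begin


definition rhom :: "('a::division_ring \<Rightarrow> 'a) \<Rightarrow> bool" where
  "rhom f \<longleftrightarrow> (\<forall>x y. f (x + y) = f x + f y) \<and> (\<forall>x y. f (x * y) = f x * f y) \<and> f 1 = 1"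

lemma rhom_id: "rhom id" by (simp add: rhom_def)
lemma rhom_comp: "rhom f \<Longrightarrow> rhom g \<Longrightarrow> rhom (f \<circ> g)" by (simp add: rhom_def)
lemma rhom_funpow: "rhom f \<Longrightarrow> rhom (f ^^ n)"
  by (induction n) (auto simp: rhom_id rhom_comp simp del: funpow.simps(2) simp add: funpow_Suc_right)
lemma rhom_add: "rhom f \<Longrightarrow> f (x + y) = f x + f y" by (simp add: rhom_def)
lemma rhom_mult: "rhom f \<Longrightarrow> f (x * y) = f x * f y" by (simp add: rhom_def)
lemma rhom_one: "rhom f \<Longrightarrow> f 1 = 1" by (simp add: rhom_def)
lemma rhom_zero: "rhom f \<Longrightarrow> f 0 = 0"
  using rhom_add[of f 0 0] by simp
lemma rhom_uminus: "rhom f \<Longrightarrow> f (- x) = - f x"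
proof -
  assume f: "rhom f"
  have "f (- x) + f x = 0" using rhom_add[OF f, of "-x" x] rhom_zero[OF f] by simp
  thus ?thesis by (simp add: eq_neg_iff_add_eq_0)
qed
lemma rhom_sum: "rhom f \<Longrightarrow> f (sum g A) = (\<Sum>a\<in>A. f (g a))"
  by (induction A rule: infinite_finite_induct) (auto simp: rhom_zero rhom_add)

definition spow :: "('a \<Rightarrow> 'a) \<Rightarrow> int \<Rightarrow> 'a \<Rightarrow> 'a" where
  "spow \<sigma> k = (if 0 \<le> k then \<sigma> ^^ nat k else inv_into UNIV \<sigma> ^^ nat (-k))"

context
  fixes \<sigma> :: "'a::division_ring \<Rightarrow> 'a"
  assumes aut: "ring_aut \<sigma>"
begin

lemma sig_rhom: "rhom \<sigma>" using aut by (simp add: ring_aut_def rhom_def)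
lemma sig_bij: "bij \<sigma>" using aut by (simp add: ring_aut_def)
lemma inv_sig1: "inv_into UNIV \<sigma> \<circ> \<sigma> = id" using sig_bij by (simp add: bij_is_inj)
lemma inv_sig2: "\<sigma> \<circ> inv_into UNIV \<sigma> = id" using sig_bij by (intro ext) (simp add: bij_is_surj f_inv_into_f)
lemma inv_rhom: "rhom (inv_into UNIV \<sigma>)"
proof -
  have a: "inv_into UNIV \<sigma> (\<sigma> x) = x" for x using inv_sig1 by (metis comp_apply id_apply)
  have b: "\<sigma> (inv_into UNIV \<sigma> x) = x" for x using inv_sig2 by (metis comp_apply id_apply)
  have "inv_into UNIV \<sigma> (x + y) = inv_into UNIV \<sigma> x + inv_into UNIV \<sigma> y" for x y
    using a[of "inv_into UNIV \<sigma> x + inv_into UNIV \<sigma> y"] rhom_add[OF sig_rhom] b by metis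
  moreover have "inv_into UNIV \<sigma> (x * y) = inv_into UNIV \<sigma> x * inv_into UNIV \<sigma> y" for x y
    using a[of "inv_into UNIV \<sigma> x * inv_into UNIV \<sigma> y"] rhom_mult[OF sig_rhom] b by metis
  moreover have "inv_into UNIV \<sigma> 1 = 1" using a[of 1] rhom_one[OF sig_rhom] by metis
  ultimately show ?thesis unfolding rhom_def by blast
qed


lemma spow_0: "spow \<sigma> 0 = id" by (simp add: spow_def)

lemma spow_succ: "spow \<sigma> (i + 1) = \<sigma> \<circ> spow \<sigma> i"
proof (cases "0 \<le> i")
  case True
  then have "nat (i + 1) = Suc (nat i)" by simp
  with True show ?thesis by (simp add: spow_def)
next
  case False
  show ?thesis
  proof (cases "i = -1")
    case True
    then show ?thesis using inv_sig2 by (simp add: spow_def)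
  next
    case False2: False
    with False have i: "nat (-i) = Suc (nat (- (i+1)))" "\<not> 0 \<le> i + 1" by auto
    show ?thesis using False i
      by (simp add: spow_def o_assoc[symmetric] inv_sig2 del: funpow.simps)
         (simp add: o_assoc inv_sig2)
  qed
qed

lemma spow_pred: "spow \<sigma> (i - 1) = inv_into UNIV \<sigma> \<circ> spow \<sigma> i"
proof -
  have "spow \<sigma> i = \<sigma> \<circ> spow \<sigma> (i - 1)" using spow_succ[of "i - 1"] by simp
  then have "inv_into UNIV \<sigma> \<circ> spow \<sigma> i = spow \<sigma> (i - 1)"
    by (simp add: o_assoc inv_sig1)
  then show ?thesis by simp
qed

lemma spow_add: "spow \<sigma> (i + j) = spow \<sigma> i \<circ> spow \<sigma> j"
proof (induction i rule: int_induct[where k=0])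
  case base
  then show ?case by (simp add: spow_0)
next
  case (step1 i)
  have "spow \<sigma> (i + 1 + j) = spow \<sigma> ((i + j) + 1)" by (simp add: ac_simps)
  also have "\<dots> = \<sigma> \<circ> spow \<sigma> (i + j)" by (rule spow_succ)
  finally show ?case using step1 by (simp add: spow_succ o_assoc)
next
  case (step2 i)
  have "spow \<sigma> (i - 1 + j) = spow \<sigma> ((i + j) - 1)" by (simp add: algebra_simps)
  also have "\<dots> = inv_into UNIV \<sigma> \<circ> spow \<sigma> (i + j)" by (rule spow_pred)
  finally show ?case using step2 by (simp add: spow_pred o_assoc)
qed

lemma spow_rhom: "rhom (spow \<sigma> k)"
  by (simp add: spow_def rhom_funpow sig_rhom inv_rhom)

lemma spow_cancel: "spow \<sigma> (- k) (spow \<sigma> k x) = x"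
  using spow_add[of "-k" k] spow_0 by (metis add.left_inverse comp_apply id_apply)

lemma spow_eq0_iff: "spow \<sigma> k x = 0 \<longleftrightarrow> x = 0"
  by (metis spow_cancel rhom_zero spow_rhom)

lemma spow_nat: "spow \<sigma> (int n) = \<sigma> ^^ n" by (simp add: spow_def)
lemma spow_neg_nat: "spow \<sigma> (- int n) = inv_into UNIV \<sigma> ^^ n"
proof (cases n)
  case (Suc m)
  have "nat (int m + 1) = Suc m" by simp
  then show ?thesis using Suc by (simp add: spow_def del: funpow.simps)
qed (simp add: spow_def)

end


definition deg2 :: "(nat \<Rightarrow> nat) \<Rightarrow> int" where
  "deg2 \<alpha> = int (\<alpha> 0) - int (\<alpha> 1)"

definition mono :: "'a::zero \<Rightarrow> (nat \<Rightarrow> nat) \<Rightarrow> (nat \<Rightarrow> nat) \<Rightarrow> 'a" where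
  "mono c \<alpha> = (\<lambda>\<gamma>. if \<gamma> = \<alpha> then c else 0)"

lemma deg2_add: "deg2 (\<lambda>i. a i + b i) = deg2 a + deg2 b" by (simp add: deg2_def)
lemma deg2_diff: "b \<le> a \<Longrightarrow> deg2 (\<lambda>i. a i - b i) = deg2 a - deg2 b"
  by (simp add: deg2_def le_fun_def of_nat_diff)

lemma finite_le_exps: assumes "\<gamma> \<in> exps n" shows "finite {\<alpha>. \<alpha> \<le> \<gamma>}"
proof -
  have inj: "inj_on (\<lambda>\<alpha>. restrict \<alpha> {..<n}) {\<alpha>. \<alpha> \<le> \<gamma>}"
  proof (rule inj_onI)
    fix a b assume a: "a \<in> {\<alpha>. \<alpha> \<le> \<gamma>}" and b: "b \<in> {\<alpha>. \<alpha> \<le> \<gamma>}"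
      and e: "restrict a {..<n} = restrict b {..<n}"
    show "a = b"
    proof
      fix i show "a i = b i"
      proof (cases "i < n")
        case True then show ?thesis using e by (metis lessThan_iff restrict_apply')
      next
        case False
        then have "\<gamma> i = 0" using assms by (simp add: exps_def)
        then show ?thesis using a b by (simp add: le_fun_def) (metis le_zero_eq)
      qed
    qed
  qed
  have "(\<lambda>\<alpha>. restrict \<alpha> {..<n}) ` {\<alpha>. \<alpha> \<le> \<gamma>} \<subseteq> PiE {..<n} (\<lambda>i. {..\<gamma> i})"
    by (intro image_subsetI) (auto simp: le_fun_def restrict_PiE_iff)
  then have "finite ((\<lambda>\<alpha>. restrict \<alpha> {..<n}) ` {\<alpha>. \<alpha> \<le> \<gamma>})"
    by (rule finite_subset) (simp add: finite_PiE)
  then show ?thesis using inj finite_image_iff by blast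
qed

lemma exps_le: "\<gamma> \<in> exps n \<Longrightarrow> \<alpha> \<le> \<gamma> \<Longrightarrow> \<alpha> \<in> exps n"
  by (simp add: exps_def le_fun_def) (metis le_zero_eq)

lemma exps_diff: "\<gamma> \<in> exps n \<Longrightarrow> (\<lambda>i. \<gamma> i - \<alpha> i) \<in> exps n"
  by (simp add: exps_def)

lemma exps_add: "a \<in> exps n \<Longrightarrow> b \<in> exps n \<Longrightarrow> (\<lambda>i. a i + b i) \<in> exps n"
  by (simp add: exps_def)

definition CC :: "((nat \<Rightarrow> nat) \<Rightarrow> 'a::division_ring) set" where "CC = {p. finite {\<alpha>. p \<alpha> \<noteq> 0} \<and> (\<forall>\<alpha>. p \<alpha> \<noteq> 0 \<longrightarrow> \<alpha> \<in> exps 2)}"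

context
  fixes \<sigma> :: "'a::division_ring \<Rightarrow> 'a"
  assumes aut: "ring_aut \<sigma>"
begin

abbreviation "RR \<equiv> skew_poly_ring [\<sigma>, inv_into UNIV \<sigma>]"
abbreviation "sp \<equiv> spow \<sigma>"

lemma sig_pow_eq: "sig_pow [\<sigma>, inv_into UNIV \<sigma>] \<alpha> = sp (deg2 \<alpha>)"
proof -
  have "sig_pow [\<sigma>, inv_into UNIV \<sigma>] \<alpha> = (\<sigma> ^^ \<alpha> 0) \<circ> (inv_into UNIV \<sigma> ^^ \<alpha> 1)"
    by (simp add: sig_pow_def upt_rec)
  also have "\<dots> = sp (int (\<alpha> 0)) \<circ> sp (- int (\<alpha> 1))"
    by (simp add: spow_nat[OF aut] spow_neg_nat[OF aut])
  also have "\<dots> = sp (deg2 \<alpha>)" by (simp add: spow_add[OF aut, symmetric] deg2_def)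
  finally show ?thesis .
qed

lemma sm_def: "skew_mult [\<sigma>, inv_into UNIV \<sigma>] p q \<gamma> = (if \<gamma> \<in> exps 2 then
      (\<Sum>\<alpha>\<in>{\<alpha>. \<alpha> \<le> \<gamma>}. p \<alpha> * sp (deg2 \<alpha>) (q (\<lambda>i. \<gamma> i - \<alpha> i))) else 0)"
  by (simp add: skew_mult_def sig_pow_eq numeral_2_eq_2)

lemma sp_rhom: "rhom (sp k)" by (rule spow_rhom[OF aut])

lemma sm_assoc:
  "skew_mult [\<sigma>, inv_into UNIV \<sigma>] (skew_mult [\<sigma>, inv_into UNIV \<sigma>] p q) r =
   skew_mult [\<sigma>, inv_into UNIV \<sigma>] p (skew_mult [\<sigma>, inv_into UNIV \<sigma>] q r)"
proof
  fix \<gamma>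
  show "skew_mult [\<sigma>, inv_into UNIV \<sigma>] (skew_mult [\<sigma>, inv_into UNIV \<sigma>] p q) r \<gamma> =
   skew_mult [\<sigma>, inv_into UNIV \<sigma>] p (skew_mult [\<sigma>, inv_into UNIV \<sigma>] q r) \<gamma>"
  proof (cases "\<gamma> \<in> exps 2")
    case False then show ?thesis by (simp add: sm_def)
  next
    case True
    note fin = finite_le_exps[OF True]
    define F where "F \<beta> \<alpha> = p \<beta> * sp (deg2 \<beta>) (q (\<lambda>i. \<alpha> i - \<beta> i)) * sp (deg2 \<alpha>) (r (\<lambda>i. \<gamma> i - \<alpha> i))" for \<beta> \<alpha>
    have "skew_mult [\<sigma>, inv_into UNIV \<sigma>] (skew_mult [\<sigma>, inv_into UNIV \<sigma>] p q) r \<gamma>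
        = (\<Sum>\<alpha>\<in>{\<alpha>. \<alpha> \<le> \<gamma>}. \<Sum>\<beta>\<in>{\<beta>. \<beta> \<le> \<alpha>}. F \<beta> \<alpha>)"
      using True by (auto simp: sm_def F_def sum_distrib_right exps_le intro!: sum.cong)
    also have "\<dots> = (\<Sum>\<alpha>\<in>{\<alpha>. \<alpha> \<le> \<gamma>}. \<Sum>\<beta>\<in>{\<beta>\<in>{\<beta>. \<beta> \<le> \<gamma>}. \<beta> \<le> \<alpha>}. F \<beta> \<alpha>)"
      by (intro sum.cong refl) (auto intro: order_trans)
    also have "\<dots> = (\<Sum>\<beta>\<in>{\<beta>. \<beta> \<le> \<gamma>}. \<Sum>\<alpha>\<in>{\<alpha>\<in>{\<alpha>. \<alpha> \<le> \<gamma>}. \<beta> \<le> \<alpha>}. F \<beta> \<alpha>)"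
      by (rule sum.swap_restrict[OF fin fin])
    also have "\<dots> = (\<Sum>\<beta>\<in>{\<beta>. \<beta> \<le> \<gamma>}. \<Sum>\<delta>\<in>{\<delta>. \<delta> \<le> (\<lambda>i. \<gamma> i - \<beta> i)}. F \<beta> (\<lambda>i. \<beta> i + \<delta> i))"
    proof (rule sum.cong[OF refl])
      fix \<beta> assume "\<beta> \<in> {\<beta>. \<beta> \<le> \<gamma>}"
      then have b: "\<beta> \<le> \<gamma>" by simp
      show "(\<Sum>\<alpha>\<in>{\<alpha>\<in>{\<alpha>. \<alpha> \<le> \<gamma>}. \<beta> \<le> \<alpha>}. F \<beta> \<alpha>) = (\<Sum>\<delta>\<in>{\<delta>. \<delta> \<le> (\<lambda>i. \<gamma> i - \<beta> i)}. F \<beta> (\<lambda>i. \<beta> i + \<delta> i))"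
        apply (rule sum.reindex_bij_witness[of _ "\<lambda>\<delta> i. \<beta> i + \<delta> i" "\<lambda>\<alpha> i. \<alpha> i - \<beta> i"])
        using b apply (auto simp: le_fun_def)
        apply (metis diff_le_mono)
        subgoal for b x by (drule spec[of _ x])+ linarith
        done
    qed
    also have "\<dots> = skew_mult [\<sigma>, inv_into UNIV \<sigma>] p (skew_mult [\<sigma>, inv_into UNIV \<sigma>] q r) \<gamma>"
    proof -
      have "skew_mult [\<sigma>, inv_into UNIV \<sigma>] p (skew_mult [\<sigma>, inv_into UNIV \<sigma>] q r) \<gamma>
        = (\<Sum>\<beta>\<in>{\<beta>. \<beta> \<le> \<gamma>}. p \<beta> * sp (deg2 \<beta>) (\<Sum>\<delta>\<in>{\<delta>. \<delta> \<le> (\<lambda>i. \<gamma> i - \<beta> i)}.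
              q \<delta> * sp (deg2 \<delta>) (r (\<lambda>i. (\<gamma> i - \<beta> i) - \<delta> i))))"
        using True by (simp add: sm_def exps_diff)
      also have "\<dots> = (\<Sum>\<beta>\<in>{\<beta>. \<beta> \<le> \<gamma>}. \<Sum>\<delta>\<in>{\<delta>. \<delta> \<le> (\<lambda>i. \<gamma> i - \<beta> i)}. F \<beta> (\<lambda>i. \<beta> i + \<delta> i))"
      proof (rule sum.cong[OF refl])
        fix \<beta> assume b: "\<beta> \<in> {\<beta>. \<beta> \<le> \<gamma>}"
        have e1: "(\<lambda>i. \<beta> i + \<delta> i - \<beta> i) = \<delta>" for \<delta> by simp
        have e2: "(\<lambda>i. \<gamma> i - (\<beta> i + \<delta> i)) = (\<lambda>i. \<gamma> i - \<beta> i - \<delta> i)" for \<delta> by (simp add: diff_diff_left)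
        have e3: "sp (deg2 (\<lambda>i. \<beta> i + \<delta> i)) x = sp (deg2 \<beta>) (sp (deg2 \<delta>) x)" for x \<delta>
          by (simp add: deg2_add spow_add[OF aut])
        show "p \<beta> * sp (deg2 \<beta>) (\<Sum>\<delta>\<in>{\<delta>. \<delta> \<le> (\<lambda>i. \<gamma> i - \<beta> i)}.
              q \<delta> * sp (deg2 \<delta>) (r (\<lambda>i. (\<gamma> i - \<beta> i) - \<delta> i))) =
          (\<Sum>\<delta>\<in>{\<delta>. \<delta> \<le> (\<lambda>i. \<gamma> i - \<beta> i)}. F \<beta> (\<lambda>i. \<beta> i + \<delta> i))"
          by (simp add: F_def e1 diff_diff_left e3 rhom_sum[OF sp_rhom] rhom_mult[OF sp_rhom] sum_distrib_left mult.assoc)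
      qed
      finally show ?thesis by simp
    qed
    finally show ?thesis .
  qed
qed



lemma RR_carrier: "carrier RR = CC"
  by (simp add: skew_poly_ring_def CC_def numeral_2_eq_2)
lemma RR_mult: "x \<otimes>\<^bsub>RR\<^esub> y = skew_mult [\<sigma>, inv_into UNIV \<sigma>] x y"
  by (simp add: skew_poly_ring_def)
lemma RR_one: "\<one>\<^bsub>RR\<^esub> = mono 1 (\<lambda>_. 0)"
  by (simp add: skew_poly_ring_def mono_def)
lemma RR_zero: "\<zero>\<^bsub>RR\<^esub> = (\<lambda>_. 0)"
  by (simp add: skew_poly_ring_def)
lemma RR_add: "x \<oplus>\<^bsub>RR\<^esub> y = (\<lambda>\<alpha>. x \<alpha> + y \<alpha>)"
  by (simp add: skew_poly_ring_def)

abbreviation "sm \<equiv> skew_mult [\<sigma>, inv_into UNIV \<sigma>]"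

lemma sm_mono_left: "sm (mono c \<alpha>) q \<gamma> =
   (if \<gamma> \<in> exps 2 \<and> \<alpha> \<le> \<gamma> then c * sp (deg2 \<alpha>) (q (\<lambda>i. \<gamma> i - \<alpha> i)) else 0)"
proof (cases "\<gamma> \<in> exps 2")
  case True
  have "sm (mono c \<alpha>) q \<gamma> = (\<Sum>\<alpha>'\<in>{\<alpha>. \<alpha> \<le> \<gamma>}. if \<alpha>' = \<alpha> then c * sp (deg2 \<alpha>) (q (\<lambda>i. \<gamma> i - \<alpha> i)) else 0)"
    using True by (auto simp: sm_def mono_def intro!: sum.cong)
  also have "\<dots> = (if \<alpha> \<le> \<gamma> then c * sp (deg2 \<alpha>) (q (\<lambda>i. \<gamma> i - \<alpha> i)) else 0)"
    by (simp add: sum.delta[OF finite_le_exps[OF True]])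
  finally show ?thesis using True by simp
qed (simp add: sm_def)

lemma sm_mono_right: "sm p (mono c \<beta>) \<gamma> =
   (if \<gamma> \<in> exps 2 \<and> \<beta> \<le> \<gamma> then p (\<lambda>i. \<gamma> i - \<beta> i) * sp (deg2 (\<lambda>i. \<gamma> i - \<beta> i)) c else 0)"
proof (cases "\<gamma> \<in> exps 2")
  case True
  have key: "((\<lambda>i. \<gamma> i - \<alpha> i) = \<beta>) \<longleftrightarrow> (\<beta> \<le> \<gamma> \<and> \<alpha> = (\<lambda>i. \<gamma> i - \<beta> i))" if "\<alpha> \<le> \<gamma>" for \<alpha>
  proof
    assume h: "(\<lambda>i. \<gamma> i - \<alpha> i) = \<beta>"
    then show "\<beta> \<le> \<gamma> \<and> \<alpha> = (\<lambda>i. \<gamma> i - \<beta> i)" using that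
      by (auto simp: le_fun_def)
  next
    assume h: "\<beta> \<le> \<gamma> \<and> \<alpha> = (\<lambda>i. \<gamma> i - \<beta> i)"
    then show "(\<lambda>i. \<gamma> i - \<alpha> i) = \<beta>" by (auto simp: le_fun_def)
  qed
  have "sm p (mono c \<beta>) \<gamma> = (\<Sum>\<alpha>\<in>{\<alpha>. \<alpha> \<le> \<gamma>}. if \<beta> \<le> \<gamma> \<and> \<alpha> = (\<lambda>i. \<gamma> i - \<beta> i) then p \<alpha> * sp (deg2 \<alpha>) c else 0)"
    using True by (auto simp: sm_def mono_def key rhom_zero[OF sp_rhom] intro!: sum.cong)
  also have "\<dots> = (if \<beta> \<le> \<gamma> then p (\<lambda>i. \<gamma> i - \<beta> i) * sp (deg2 (\<lambda>i. \<gamma> i - \<beta> i)) c else 0)"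
  proof (cases "\<beta> \<le> \<gamma>")
    case b: True
    have m: "(\<lambda>i. \<gamma> i - \<beta> i) \<in> {\<alpha>. \<alpha> \<le> \<gamma>}" by (simp add: le_fun_def)
    show ?thesis using b m by (simp only: simp_thms if_True sum.delta[OF finite_le_exps[OF True]])
  qed simp
  finally show ?thesis using True by simp
qed (simp add: sm_def)

lemma sm_support: "sm p q \<gamma> \<noteq> 0 \<Longrightarrow> \<gamma> \<in> exps 2 \<and> (\<exists>\<alpha>\<le>\<gamma>. p \<alpha> \<noteq> 0 \<and> q (\<lambda>i. \<gamma> i - \<alpha> i) \<noteq> 0)"
proof -
  assume h: "sm p q \<gamma> \<noteq> 0"
  then have g: "\<gamma> \<in> exps 2" by (rule contrapos_np) (simp add: sm_def)
  with h have "(\<Sum>\<alpha>\<in>{\<alpha>. \<alpha> \<le> \<gamma>}. p \<alpha> * sp (deg2 \<alpha>) (q (\<lambda>i. \<gamma> i - \<alpha> i))) \<noteq> 0"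
    by (simp add: sm_def)
  then obtain \<alpha> where "\<alpha> \<le> \<gamma>" "p \<alpha> * sp (deg2 \<alpha>) (q (\<lambda>i. \<gamma> i - \<alpha> i)) \<noteq> 0"
    by (rule sum.not_neutral_contains_not_neutral) simp
  moreover have "sp (deg2 \<alpha>) 0 = 0" by (rule rhom_zero[OF sp_rhom])
  ultimately show ?thesis using g by (metis mult_zero_left mult_zero_right)
qed

lemma CC_mult: assumes "p \<in> CC" "q \<in> CC" shows "sm p q \<in> CC"
proof -
  have "{\<gamma>. sm p q \<gamma> \<noteq> 0} \<subseteq> (\<lambda>(a, b) i. a i + b i) ` ({\<alpha>. p \<alpha> \<noteq> 0} \<times> {\<alpha>. q \<alpha> \<noteq> 0})"
  proof
    fix \<gamma> assume "\<gamma> \<in> {\<gamma>. sm p q \<gamma> \<noteq> 0}"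
    then obtain \<alpha> where a: "\<alpha> \<le> \<gamma>" "p \<alpha> \<noteq> 0" "q (\<lambda>i. \<gamma> i - \<alpha> i) \<noteq> 0"
      using sm_support by blast
    have "\<gamma> = (\<lambda>i. \<alpha> i + (\<gamma> i - \<alpha> i))" using a(1) by (auto simp: le_fun_def)
    then show "\<gamma> \<in> (\<lambda>(a, b) i. a i + b i) ` ({\<alpha>. p \<alpha> \<noteq> 0} \<times> {\<alpha>. q \<alpha> \<noteq> 0})"
      using a by (intro image_eqI[where x="(\<alpha>, \<lambda>i. \<gamma> i - \<alpha> i)"]) auto
  qed
  moreover have "finite ((\<lambda>(a, b) i. a i + b i) ` ({\<alpha>. p \<alpha> \<noteq> 0} \<times> {\<alpha>. q \<alpha> \<noteq> 0}))"
    using assms by (simp add: CC_def)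
  ultimately show ?thesis using sm_support by (auto simp: CC_def intro: finite_subset)
qed

lemma mono_CC: "\<alpha> \<in> exps 2 \<Longrightarrow> mono c \<alpha> \<in> CC"
  by (auto simp: CC_def mono_def)

lemma zero_exps: "(\<lambda>_. 0) \<in> exps n" by (simp add: exps_def)

lemma sm_one_left: "q \<in> CC \<Longrightarrow> sm (mono 1 (\<lambda>_. 0)) q = q"
  by (rule ext) (auto simp: sm_mono_left deg2_def spow_0[OF aut] CC_def le_fun_def)

lemma sm_one_right: "p \<in> CC \<Longrightarrow> sm p (mono 1 (\<lambda>_. 0)) = p"
  by (rule ext) (auto simp: sm_mono_right rhom_one[OF sp_rhom] CC_def le_fun_def)

lemma sm_distl: "sm (\<lambda>\<alpha>. p \<alpha> + q \<alpha>) r = (\<lambda>\<alpha>. sm p r \<alpha> + sm q r \<alpha>)"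
  by (rule ext) (simp add: sm_def distrib_right sum.distrib)

lemma sm_distr: "sm r (\<lambda>\<alpha>. p \<alpha> + q \<alpha>) = (\<lambda>\<alpha>. sm r p \<alpha> + sm r q \<alpha>)"
  by (rule ext) (simp add: sm_def distrib_left sum.distrib rhom_add[OF sp_rhom])

lemma CC_add: "p \<in> CC \<Longrightarrow> q \<in> CC \<Longrightarrow> (\<lambda>\<alpha>. p \<alpha> + q \<alpha>) \<in> CC"
proof -
  assume a: "p \<in> CC" "q \<in> CC"
  have "{\<alpha>. p \<alpha> + q \<alpha> \<noteq> 0} \<subseteq> {\<alpha>. p \<alpha> \<noteq> 0} \<union> {\<alpha>. q \<alpha> \<noteq> 0}" by auto
  then show ?thesis using a unfolding CC_def by (auto intro: finite_subset)
qed

lemma CC_neg: "p \<in> CC \<Longrightarrow> (\<lambda>\<alpha>. - p \<alpha>) \<in> CC"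
  by (simp add: CC_def)

lemma RR_ring: "ring RR"
proof (rule ringI)
  show "abelian_group RR"
  proof (rule abelian_groupI)
    fix x y assume "x \<in> carrier RR" "y \<in> carrier RR"
    then show "x \<oplus>\<^bsub>RR\<^esub> y \<in> carrier RR" by (simp add: RR_carrier RR_add CC_add)
  next
    show "\<zero>\<^bsub>RR\<^esub> \<in> carrier RR" by (simp add: RR_carrier RR_zero CC_def)
  next
    fix x y z show "x \<oplus>\<^bsub>RR\<^esub> y \<oplus>\<^bsub>RR\<^esub> z = x \<oplus>\<^bsub>RR\<^esub> (y \<oplus>\<^bsub>RR\<^esub> z)"
      by (simp add: RR_add add.assoc)
  next
    fix x y show "x \<oplus>\<^bsub>RR\<^esub> y = y \<oplus>\<^bsub>RR\<^esub> x" by (simp add: RR_add add.commute)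
  next
    fix x show "\<zero>\<^bsub>RR\<^esub> \<oplus>\<^bsub>RR\<^esub> x = x" by (simp add: RR_add RR_zero)
  next
    fix x assume "x \<in> carrier RR"
    then have "(\<lambda>\<alpha>. - x \<alpha>) \<in> carrier RR" "(\<lambda>\<alpha>. - x \<alpha>) \<oplus>\<^bsub>RR\<^esub> x = \<zero>\<^bsub>RR\<^esub>"
      by (simp_all add: RR_carrier CC_neg RR_add RR_zero)
    then show "\<exists>y\<in>carrier RR. y \<oplus>\<^bsub>RR\<^esub> x = \<zero>\<^bsub>RR\<^esub>" by blast
  qed
  show "monoid RR"
  proof (rule monoidI)
    fix x y assume "x \<in> carrier RR" "y \<in> carrier RR"
    then show "x \<otimes>\<^bsub>RR\<^esub> y \<in> carrier RR" by (simp add: RR_carrier RR_mult CC_mult)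
  next
    show "\<one>\<^bsub>RR\<^esub> \<in> carrier RR" by (simp add: RR_carrier RR_one mono_CC zero_exps)
  next
    fix x y z show "x \<otimes>\<^bsub>RR\<^esub> y \<otimes>\<^bsub>RR\<^esub> z = x \<otimes>\<^bsub>RR\<^esub> (y \<otimes>\<^bsub>RR\<^esub> z)"
      by (simp add: RR_mult sm_assoc)
  next
    fix x assume "x \<in> carrier RR"
    then show "\<one>\<^bsub>RR\<^esub> \<otimes>\<^bsub>RR\<^esub> x = x" by (simp add: RR_carrier RR_mult RR_one sm_one_left)
  next
    fix x assume "x \<in> carrier RR"
    then show "x \<otimes>\<^bsub>RR\<^esub> \<one>\<^bsub>RR\<^esub> = x" by (simp add: RR_carrier RR_mult RR_one sm_one_right)
  qed
next
  fix x y z show "(x \<oplus>\<^bsub>RR\<^esub> y) \<otimes>\<^bsub>RR\<^esub> z = x \<otimes>\<^bsub>RR\<^esub> z \<oplus>\<^bsub>RR\<^esub> y \<otimes>\<^bsub>RR\<^esub> z"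
    by (simp add: RR_mult RR_add sm_distl)
next
  fix x y z show "z \<otimes>\<^bsub>RR\<^esub> (x \<oplus>\<^bsub>RR\<^esub> y) = z \<otimes>\<^bsub>RR\<^esub> x \<oplus>\<^bsub>RR\<^esub> z \<otimes>\<^bsub>RR\<^esub> y"
    by (simp add: RR_mult RR_add sm_distr)
qed

end


definition lc :: "((nat \<Rightarrow> nat) \<Rightarrow> 'a::comm_monoid_add) \<Rightarrow> int \<Rightarrow> 'a" where
  "lc p k = (\<Sum>\<alpha> | p \<alpha> \<noteq> 0 \<and> deg2 \<alpha> = k. p \<alpha>)"

lemma lc_sup: assumes "finite F" "{\<alpha>. p \<alpha> \<noteq> 0} \<subseteq> F"
  shows "lc p k = (\<Sum>\<alpha>\<in>{\<alpha>\<in>F. deg2 \<alpha> = k}. p \<alpha>)"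
  unfolding lc_def
  by (rule sum.mono_neutral_left) (use assms in \<open>auto intro: finite_subset\<close>)

lemma lc_mono: "lc (mono c \<alpha>) k = (if deg2 \<alpha> = k then c else 0)"
proof -
  have "lc (mono c \<alpha>) k = (\<Sum>x\<in>{x\<in>{\<alpha>}. deg2 x = k}. mono c \<alpha> x)"
    by (rule lc_sup) (auto simp: mono_def)
  moreover have "{x\<in>{\<alpha>}. deg2 x = k} = (if deg2 \<alpha> = k then {\<alpha>} else {})" by auto
  ultimately show ?thesis by (simp add: mono_def)
qed

lemma lc_zero: "lc (\<lambda>_. 0) k = 0" by (simp add: lc_def)

context
  fixes \<sigma> :: "'a::division_ring \<Rightarrow> 'a"
  assumes aut: "ring_aut \<sigma>"
begin

lemma CC_fin: "p \<in> CC \<Longrightarrow> finite {\<alpha>. p \<alpha> \<noteq> 0}" by (simp add: CC_def)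
lemma CC_exps: "p \<in> CC \<Longrightarrow> p \<alpha> \<noteq> 0 \<Longrightarrow> \<alpha> \<in> exps 2" by (simp add: CC_def)

lemma lc_add: assumes "p \<in> CC" "q \<in> CC"
  shows "lc (\<lambda>\<alpha>. p \<alpha> + q \<alpha>) k = lc p k + lc q k"
proof -
  define F where "F = {\<alpha>. p \<alpha> \<noteq> 0} \<union> {\<alpha>. q \<alpha> \<noteq> 0}"
  have f: "finite F" using assms by (simp add: F_def CC_fin)
  have "lc (\<lambda>\<alpha>. p \<alpha> + q \<alpha>) k = (\<Sum>\<alpha>\<in>{\<alpha>\<in>F. deg2 \<alpha> = k}. p \<alpha> + q \<alpha>)"
    by (rule lc_sup[OF f]) (auto simp: F_def)
  also have "\<dots> = lc p k + lc q k"
    by (simp add: sum.distrib lc_sup[OF f, of p] lc_sup[OF f, of q] F_def)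
  finally show ?thesis .
qed

lemma lc_neg: "lc (\<lambda>\<alpha>. - p \<alpha>) k = - lc p k" for p :: "(nat \<Rightarrow> nat) \<Rightarrow> 'a"
  by (simp add: lc_def sum_negf)

lemma CC_sum: "finite F \<Longrightarrow> (\<And>x. x \<in> F \<Longrightarrow> f x \<in> CC) \<Longrightarrow> (\<lambda>\<gamma>. \<Sum>x\<in>F. f x \<gamma>) \<in> CC"
proof (induction F rule: finite_induct)
  case empty then show ?case by (simp add: CC_def)
next
  case (insert x F)
  then show ?case by (simp add: CC_add[OF aut])
qed

lemma lc_sum: "finite F \<Longrightarrow> (\<And>x. x \<in> F \<Longrightarrow> f x \<in> CC) \<Longrightarrow> lc (\<lambda>\<gamma>. \<Sum>x\<in>F. f x \<gamma>) k = (\<Sum>x\<in>F. lc (f x) k)"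
proof (induction F rule: finite_induct)
  case empty then show ?case by (simp add: lc_zero)
next
  case (insert x F)
  then show ?case by (simp add: lc_add CC_sum)
qed

lemma decomp: "p \<in> CC \<Longrightarrow> p = (\<lambda>\<gamma>. \<Sum>\<alpha>\<in>{\<alpha>. p \<alpha> \<noteq> 0}. mono (p \<alpha>) \<alpha> \<gamma>)"
proof (rule ext)
  fix \<gamma> assume p: "p \<in> CC"
  have "(\<Sum>\<alpha>\<in>{\<alpha>. p \<alpha> \<noteq> 0}. mono (p \<alpha>) \<alpha> \<gamma>) = (\<Sum>\<alpha>\<in>{\<alpha>. p \<alpha> \<noteq> 0}. if \<gamma> = \<alpha> then p \<alpha> else 0)"
    by (simp add: mono_def)
  also have "\<dots> = p \<gamma>" using CC_fin[OF p] by (simp add: sum.delta)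
  finally show "p \<gamma> = (\<Sum>\<alpha>\<in>{\<alpha>. p \<alpha> \<noteq> 0}. mono (p \<alpha>) \<alpha> \<gamma>)" by simp
qed

lemma sm_zero_left: "sm \<sigma> (\<lambda>_. 0) q = (\<lambda>_. 0)"
  by (rule ext) (simp add: sm_def[OF aut])
lemma sm_zero_right: "sm \<sigma> p (\<lambda>_. 0) = (\<lambda>_. 0)"
  by (rule ext) (simp add: sm_def[OF aut] rhom_zero[OF sp_rhom[OF aut]])

lemma sm_sum_left: "finite F \<Longrightarrow> sm \<sigma> (\<lambda>\<gamma>. \<Sum>x\<in>F. f x \<gamma>) r = (\<lambda>\<gamma>. \<Sum>x\<in>F. sm \<sigma> (f x) r \<gamma>)"
proof (induction F rule: finite_induct)
  case empty then show ?case by (simp add: sm_zero_left)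
next
  case (insert x F)
  then show ?case by (simp add: sm_distl[OF aut])
qed

lemma sm_sum_right: "finite F \<Longrightarrow> sm \<sigma> r (\<lambda>\<gamma>. \<Sum>x\<in>F. f x \<gamma>) = (\<lambda>\<gamma>. \<Sum>x\<in>F. sm \<sigma> r (f x) \<gamma>)"
proof (induction F rule: finite_induct)
  case empty then show ?case by (simp add: sm_zero_right)
next
  case (insert x F)
  then show ?case by (simp add: sm_distr[OF aut])
qed

end


definition II :: "((nat \<Rightarrow> nat) \<Rightarrow> 'a::division_ring) set" where
  "II = {p \<in> CC. \<forall>k. lc p k = 0}"

context
  fixes \<sigma> :: "'a::division_ring \<Rightarrow> 'a"
  assumes aut: "ring_aut \<sigma>"
begin

lemma lc_sm_mono_left: assumes a: "\<alpha> \<in> exps 2" and p: "p \<in> CC"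
  shows "lc (sm \<sigma> (mono c \<alpha>) p) k = c * sp \<sigma> (deg2 \<alpha>) (lc p (k - deg2 \<alpha>))"
proof -
  define S where "S = {\<beta>. p \<beta> \<noteq> 0}"
  define F where "F = (\<lambda>\<beta> i. \<alpha> i + \<beta> i) ` S"
  have fS: "finite S" using p by (simp add: S_def CC_fin[OF aut])
  then have fF: "finite F" by (simp add: F_def)
  have inj: "inj_on (\<lambda>\<beta> i. \<alpha> i + \<beta> i) Y" for Y by (auto simp: inj_on_def fun_eq_iff)
  have sub: "{\<gamma>. sm \<sigma> (mono c \<alpha>) p \<gamma> \<noteq> 0} \<subseteq> F"
  proof
    fix \<gamma> assume "\<gamma> \<in> {\<gamma>. sm \<sigma> (mono c \<alpha>) p \<gamma> \<noteq> 0}"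
    then have h: "\<gamma> \<in> exps 2" "\<alpha> \<le> \<gamma>" "p (\<lambda>i. \<gamma> i - \<alpha> i) \<noteq> 0"
      by (auto simp: sm_mono_left[OF aut] rhom_zero[OF sp_rhom[OF aut]] split: if_splits)
    have "\<gamma> = (\<lambda>i. \<alpha> i + (\<gamma> i - \<alpha> i))" using h(2) by (auto simp: le_fun_def)
    then show "\<gamma> \<in> F" unfolding F_def S_def using h(3) by (intro image_eqI[where x="\<lambda>i. \<gamma> i - \<alpha> i"]) auto
  qed
  have "lc (sm \<sigma> (mono c \<alpha>) p) k = (\<Sum>\<gamma>\<in>{\<gamma>\<in>F. deg2 \<gamma> = k}. sm \<sigma> (mono c \<alpha>) p \<gamma>)"
    by (rule lc_sup[OF fF sub])
  also have "{\<gamma>\<in>F. deg2 \<gamma> = k} = (\<lambda>\<beta> i. \<alpha> i + \<beta> i) ` {\<beta>\<in>S. deg2 \<beta> = k - deg2 \<alpha>}"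
    by (auto simp: F_def deg2_add)
  also have "(\<Sum>\<gamma>\<in>(\<lambda>\<beta> i. \<alpha> i + \<beta> i) ` {\<beta>\<in>S. deg2 \<beta> = k - deg2 \<alpha>}. sm \<sigma> (mono c \<alpha>) p \<gamma>)
      = (\<Sum>\<beta>\<in>{\<beta>\<in>S. deg2 \<beta> = k - deg2 \<alpha>}. sm \<sigma> (mono c \<alpha>) p (\<lambda>i. \<alpha> i + \<beta> i))"
    by (rule sum.reindex[OF inj, unfolded comp_def])
  also have "\<dots> = (\<Sum>\<beta>\<in>{\<beta>\<in>S. deg2 \<beta> = k - deg2 \<alpha>}. c * sp \<sigma> (deg2 \<alpha>) (p \<beta>))"
  proof (rule sum.cong[OF refl])
    fix \<beta> assume "\<beta> \<in> {\<beta>\<in>S. deg2 \<beta> = k - deg2 \<alpha>}"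
    then have b: "\<beta> \<in> exps 2" using p by (auto simp: S_def CC_exps[OF aut])
    have e: "(\<lambda>i. \<alpha> i + \<beta> i - \<alpha> i) = \<beta>" by simp
    show "sm \<sigma> (mono c \<alpha>) p (\<lambda>i. \<alpha> i + \<beta> i) = c * sp \<sigma> (deg2 \<alpha>) (p \<beta>)"
      using a b by (simp add: sm_mono_left[OF aut] exps_add le_fun_def e)
  qed
  also have "\<dots> = c * sp \<sigma> (deg2 \<alpha>) (\<Sum>\<beta>\<in>{\<beta>\<in>S. deg2 \<beta> = k - deg2 \<alpha>}. p \<beta>)"
    by (simp add: rhom_sum[OF sp_rhom[OF aut]] sum_distrib_left)
  also have "(\<Sum>\<beta>\<in>{\<beta>\<in>S. deg2 \<beta> = k - deg2 \<alpha>}. p \<beta>) = lc p (k - deg2 \<alpha>)"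
    by (simp add: lc_def S_def)
  finally show ?thesis .
qed

lemma lc_sm_mono_right: assumes a: "\<beta> \<in> exps 2" and p: "p \<in> CC"
  shows "lc (sm \<sigma> p (mono c \<beta>)) k = lc p (k - deg2 \<beta>) * sp \<sigma> (k - deg2 \<beta>) c"
proof -
  define S where "S = {\<alpha>. p \<alpha> \<noteq> 0}"
  define F where "F = (\<lambda>\<alpha> i. \<alpha> i + \<beta> i) ` S"
  have fS: "finite S" using p by (simp add: S_def CC_fin[OF aut])
  then have fF: "finite F" by (simp add: F_def)
  have inj: "inj_on (\<lambda>\<alpha> i. \<alpha> i + \<beta> i) Y" for Y by (auto simp: inj_on_def fun_eq_iff)
  have sub: "{\<gamma>. sm \<sigma> p (mono c \<beta>) \<gamma> \<noteq> 0} \<subseteq> F"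
  proof
    fix \<gamma> assume "\<gamma> \<in> {\<gamma>. sm \<sigma> p (mono c \<beta>) \<gamma> \<noteq> 0}"
    then have h: "\<gamma> \<in> exps 2" "\<beta> \<le> \<gamma>" "p (\<lambda>i. \<gamma> i - \<beta> i) \<noteq> 0"
      by (auto simp: sm_mono_right[OF aut] split: if_splits)
    have "\<gamma> = (\<lambda>i. (\<gamma> i - \<beta> i) + \<beta> i)" using h(2) by (auto simp: le_fun_def)
    then show "\<gamma> \<in> F" unfolding F_def S_def using h(3) by (intro image_eqI[where x="\<lambda>i. \<gamma> i - \<beta> i"]) auto
  qed
  have "lc (sm \<sigma> p (mono c \<beta>)) k = (\<Sum>\<gamma>\<in>{\<gamma>\<in>F. deg2 \<gamma> = k}. sm \<sigma> p (mono c \<beta>) \<gamma>)"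
    by (rule lc_sup[OF fF sub])
  also have "{\<gamma>\<in>F. deg2 \<gamma> = k} = (\<lambda>\<alpha> i. \<alpha> i + \<beta> i) ` {\<alpha>\<in>S. deg2 \<alpha> = k - deg2 \<beta>}"
    by (auto simp: F_def deg2_add)
  also have "(\<Sum>\<gamma>\<in>(\<lambda>\<alpha> i. \<alpha> i + \<beta> i) ` {\<alpha>\<in>S. deg2 \<alpha> = k - deg2 \<beta>}. sm \<sigma> p (mono c \<beta>) \<gamma>)
      = (\<Sum>\<alpha>\<in>{\<alpha>\<in>S. deg2 \<alpha> = k - deg2 \<beta>}. sm \<sigma> p (mono c \<beta>) (\<lambda>i. \<alpha> i + \<beta> i))"
    by (rule sum.reindex[OF inj, unfolded comp_def])
  also have "\<dots> = (\<Sum>\<alpha>\<in>{\<alpha>\<in>S. deg2 \<alpha> = k - deg2 \<beta>}. p \<alpha> * sp \<sigma> (k - deg2 \<beta>) c)"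
  proof (rule sum.cong[OF refl])
    fix \<alpha> assume "\<alpha> \<in> {\<alpha>\<in>S. deg2 \<alpha> = k - deg2 \<beta>}"
    then have b: "\<alpha> \<in> exps 2" "deg2 \<alpha> = k - deg2 \<beta>" using p by (auto simp: S_def CC_exps[OF aut])
    have e: "(\<lambda>i. \<alpha> i + \<beta> i - \<beta> i) = \<alpha>" by simp
    show "sm \<sigma> p (mono c \<beta>) (\<lambda>i. \<alpha> i + \<beta> i) = p \<alpha> * sp \<sigma> (k - deg2 \<beta>) c"
      using a b by (simp add: sm_mono_right[OF aut] exps_add le_fun_def e)
  qed
  also have "\<dots> = (\<Sum>\<alpha>\<in>{\<alpha>\<in>S. deg2 \<alpha> = k - deg2 \<beta>}. p \<alpha>) * sp \<sigma> (k - deg2 \<beta>) c"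
    by (simp add: sum_distrib_right)
  also have "(\<Sum>\<alpha>\<in>{\<alpha>\<in>S. deg2 \<alpha> = k - deg2 \<beta>}. p \<alpha>) = lc p (k - deg2 \<beta>)"
    by (simp add: lc_def S_def)
  finally show ?thesis .
qed

lemma lc_sm_left0: assumes q: "q \<in> CC" and p: "p \<in> CC" and z: "\<forall>j. lc p j = 0"
  shows "lc (sm \<sigma> q p) k = 0"
proof -
  define S where "S = {\<alpha>. q \<alpha> \<noteq> 0}"
  have fS: "finite S" using q by (simp add: S_def CC_fin[OF aut])
  have eq: "sm \<sigma> q p = sm \<sigma> (\<lambda>\<gamma>. \<Sum>\<alpha>\<in>S. mono (q \<alpha>) \<alpha> \<gamma>) p"
    using arg_cong[OF decomp[OF aut q], of "\<lambda>x. sm \<sigma> x p"] by (simp add: S_def)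
  have cc: "sm \<sigma> (mono (q \<alpha>) \<alpha>) p \<in> CC" if "\<alpha> \<in> S" for \<alpha>
    using that q p by (intro CC_mult[OF aut] mono_CC[OF aut]) (auto simp: S_def CC_exps[OF aut])
  have "lc (sm \<sigma> q p) k = (\<Sum>\<alpha>\<in>S. lc (sm \<sigma> (mono (q \<alpha>) \<alpha>) p) k)"
    unfolding eq sm_sum_left[OF aut fS] using cc by (simp add: lc_sum[OF aut fS])
  also have "\<dots> = 0"
    using q p z by (intro sum.neutral) (auto simp: S_def CC_exps[OF aut] lc_sm_mono_left rhom_zero[OF sp_rhom[OF aut]])
  finally show ?thesis .
qed

lemma lc_sm_right0: assumes q: "q \<in> CC" and p: "p \<in> CC" and z: "\<forall>j. lc p j = 0"
  shows "lc (sm \<sigma> p q) k = 0"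
proof -
  define S where "S = {\<alpha>. q \<alpha> \<noteq> 0}"
  have fS: "finite S" using q by (simp add: S_def CC_fin[OF aut])
  have eq: "sm \<sigma> p q = sm \<sigma> p (\<lambda>\<gamma>. \<Sum>\<alpha>\<in>S. mono (q \<alpha>) \<alpha> \<gamma>)"
    using arg_cong[OF decomp[OF aut q], of "\<lambda>x. sm \<sigma> p x"] by (simp add: S_def)
  have cc: "sm \<sigma> p (mono (q \<alpha>) \<alpha>) \<in> CC" if "\<alpha> \<in> S" for \<alpha>
    using that q p by (intro CC_mult[OF aut] mono_CC[OF aut]) (auto simp: S_def CC_exps[OF aut])
  have "lc (sm \<sigma> p q) k = (\<Sum>\<alpha>\<in>S. lc (sm \<sigma> p (mono (q \<alpha>) \<alpha>)) k)"
    unfolding eq sm_sum_right[OF aut fS] using cc by (simp add: lc_sum[OF aut fS])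
  also have "\<dots> = 0"
    using q p z by (intro sum.neutral) (auto simp: S_def CC_exps[OF aut] lc_sm_mono_right)
  finally show ?thesis .
qed

lemma II_ideal: "ideal II (RR \<sigma>)"
proof -
  interpret R: ring "RR \<sigma>" by (rule RR_ring[OF aut])
  have neg: "\<ominus>\<^bsub>RR \<sigma>\<^esub> p = (\<lambda>\<alpha>. - p \<alpha>)" if "p \<in> CC" for p
    by (rule R.minus_equality) (use that in \<open>simp_all add: RR_carrier[OF aut] RR_add[OF aut] RR_zero[OF aut] CC_neg[OF aut]\<close>)
  show ?thesis
  proof (rule idealI[OF RR_ring[OF aut]])
    show "subgroup II (add_monoid (RR \<sigma>))"
    proof (rule R.add.subgroupI)
      show "II \<subseteq> carrier (RR \<sigma>)" by (auto simp: II_def RR_carrier[OF aut])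
      show "II \<noteq> {}" using lc_zero by (auto simp: II_def CC_def intro!: exI[where x="\<lambda>_. 0"])
      fix a :: "(nat \<Rightarrow> nat) \<Rightarrow> 'a" assume "a \<in> II"
      then show "\<ominus>\<^bsub>RR \<sigma>\<^esub> a \<in> II" by (simp add: II_def neg CC_neg[OF aut] lc_neg[OF aut])
    next
      fix a b :: "(nat \<Rightarrow> nat) \<Rightarrow> 'a" assume "a \<in> II" "b \<in> II"
      then show "a \<oplus>\<^bsub>RR \<sigma>\<^esub> b \<in> II" by (simp add: II_def RR_add[OF aut] CC_add[OF aut] lc_add[OF aut])
    qed
  next
    fix a x :: "(nat \<Rightarrow> nat) \<Rightarrow> 'a" assume "a \<in> II" "x \<in> carrier (RR \<sigma>)"
    then show "x \<otimes>\<^bsub>RR \<sigma>\<^esub> a \<in> II"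
      by (simp add: II_def RR_carrier[OF aut] RR_mult[OF aut] CC_mult[OF aut] lc_sm_left0)
  next
    fix a x :: "(nat \<Rightarrow> nat) \<Rightarrow> 'a" assume "a \<in> II" "x \<in> carrier (RR \<sigma>)"
    then show "a \<otimes>\<^bsub>RR \<sigma>\<^esub> x \<in> II"
      by (simp add: II_def RR_carrier[OF aut] RR_mult[OF aut] CC_mult[OF aut] lc_sm_right0)
  qed
qed

lemma II_proper: "II \<noteq> carrier (RR \<sigma>)"
proof -
  have "mono 1 (\<lambda>_. 0) \<in> carrier (RR \<sigma>)" unfolding RR_carrier[OF aut] by (rule mono_CC[OF aut zero_exps[OF aut]])
  moreover have "lc (mono 1 (\<lambda>_. 0)) 0 = (1::'a)" by (simp add: lc_mono deg2_def)
  ultimately show ?thesis unfolding II_def by (metis (mono_tags, lifting) mem_Collect_eq one_neq_zero)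
qed

end


definition alph :: "int \<Rightarrow> nat \<Rightarrow> nat" where
  "alph d = (\<lambda>i. if i = 0 then nat d else if i = 1 then nat (-d) else 0)"

lemma alph_exps: "alph d \<in> exps 2" by (simp add: alph_def exps_def)
lemma deg2_alph: "deg2 (alph d) = d" by (simp add: alph_def deg2_def)

context
  fixes \<sigma> :: "'a::division_ring \<Rightarrow> 'a"
  assumes aut: "ring_aut \<sigma>"
begin

abbreviation "SS \<equiv> RR \<sigma> Quot II"

lemma RRr: "ring (RR \<sigma>)" by (rule RR_ring[OF aut])
lemma IIi: "ideal II (RR \<sigma>)" by (rule II_ideal[OF aut])

lemma SS_ring: "ring SS" by (rule ideal.quotient_is_ring[OF IIi])

lemma RR_neg: "p \<in> CC \<Longrightarrow> \<ominus>\<^bsub>RR \<sigma>\<^esub> p = (\<lambda>\<alpha>. - p \<alpha>)"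
proof -
  assume p: "p \<in> CC"
  interpret R: ring "RR \<sigma>" by (rule RRr)
  show ?thesis
    by (rule R.minus_equality) (use p in \<open>simp_all add: RR_carrier[OF aut] RR_add[OF aut] RR_zero[OF aut] CC_neg[OF aut]\<close>)
qed

lemma coset_eq: assumes p: "p \<in> CC" and q: "q \<in> CC"
  shows "(II +>\<^bsub>RR \<sigma>\<^esub> p = II +>\<^bsub>RR \<sigma>\<^esub> q) \<longleftrightarrow> (\<forall>k. lc p k = lc q k)"
proof -
  interpret R: ring "RR \<sigma>" by (rule RRr)
  interpret I: ideal II "RR \<sigma>" by (rule IIi)
  have pc: "p \<in> carrier (RR \<sigma>)" and qc: "q \<in> carrier (RR \<sigma>)" using p q by (simp_all add: RR_carrier[OF aut])
  have mi: "p \<ominus>\<^bsub>RR \<sigma>\<^esub> q = (\<lambda>\<alpha>. p \<alpha> + - q \<alpha>)"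
    using q by (simp add: a_minus_def RR_neg RR_add[OF aut])
  have lcm: "lc (p \<ominus>\<^bsub>RR \<sigma>\<^esub> q) k = lc p k - lc q k" for k
    unfolding mi lc_add[OF aut p CC_neg[OF aut q]] lc_neg[OF aut] by simp
  have mc: "p \<ominus>\<^bsub>RR \<sigma>\<^esub> q \<in> CC" unfolding mi by (rule CC_add[OF aut p CC_neg[OF aut q]])
  show ?thesis
  proof
    assume e: "II +>\<^bsub>RR \<sigma>\<^esub> p = II +>\<^bsub>RR \<sigma>\<^esub> q"
    have "p \<in> II +>\<^bsub>RR \<sigma>\<^esub> q" using e I.a_rcos_self[OF pc] by simp
    then have "p \<ominus>\<^bsub>RR \<sigma>\<^esub> q \<in> II" using I.a_rcos_module_minus[OF RRr qc pc] by simp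
    then show "\<forall>k. lc p k = lc q k" using lcm by (simp add: II_def)
  next
    assume "\<forall>k. lc p k = lc q k"
    then have "p \<ominus>\<^bsub>RR \<sigma>\<^esub> q \<in> II" using lcm mc by (simp add: II_def)
    then have "p \<in> II +>\<^bsub>RR \<sigma>\<^esub> q" using I.a_rcos_module_minus[OF RRr qc pc] by simp
    then show "II +>\<^bsub>RR \<sigma>\<^esub> p = II +>\<^bsub>RR \<sigma>\<^esub> q" using I.a_repr_independence'[OF _ qc] by simp
  qed
qed

lemma SS_carrier: "carrier SS = (\<lambda>p. II +>\<^bsub>RR \<sigma>\<^esub> p) ` CC"
  by (auto simp: FactRing_def A_RCOSETS_def RCOSETS_def a_r_coset_def RR_carrier[OF aut])

lemma SS_mult: "p \<in> CC \<Longrightarrow> q \<in> CC \<Longrightarrow>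
  (II +>\<^bsub>RR \<sigma>\<^esub> p) \<otimes>\<^bsub>SS\<^esub> (II +>\<^bsub>RR \<sigma>\<^esub> q) = II +>\<^bsub>RR \<sigma>\<^esub> (sm \<sigma> p q)"
  using ideal.rcoset_mult_add[OF IIi, of p q]
  by (simp add: FactRing_def RR_carrier[OF aut] RR_mult[OF aut])

lemma SS_add: "p \<in> CC \<Longrightarrow> q \<in> CC \<Longrightarrow>
  (II +>\<^bsub>RR \<sigma>\<^esub> p) \<oplus>\<^bsub>SS\<^esub> (II +>\<^bsub>RR \<sigma>\<^esub> q) = II +>\<^bsub>RR \<sigma>\<^esub> (\<lambda>\<alpha>. p \<alpha> + q \<alpha>)"
  using ideal.a_rcos_sum[OF IIi, of p q]
  by (simp add: FactRing_def RR_carrier[OF aut] RR_add[OF aut])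

lemma SS_zero: "\<zero>\<^bsub>SS\<^esub> = II +>\<^bsub>RR \<sigma>\<^esub> (\<lambda>_. 0)"
proof -
  interpret I: ideal II "RR \<sigma>" by (rule IIi)
  have "(\<lambda>_. 0) \<in> II" by (simp add: II_def CC_def lc_def)
  from I.a_rcos_const[OF this] show ?thesis by (simp add: FactRing_def)
qed

lemma SS_one: "\<one>\<^bsub>SS\<^esub> = II +>\<^bsub>RR \<sigma>\<^esub> (mono 1 (\<lambda>_. 0))"
  by (simp add: FactRing_def RR_one[OF aut])

lemma SS_neg: "p \<in> CC \<Longrightarrow> \<ominus>\<^bsub>SS\<^esub> (II +>\<^bsub>RR \<sigma>\<^esub> p) = II +>\<^bsub>RR \<sigma>\<^esub> (\<lambda>\<alpha>. - p \<alpha>)"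
proof -
  assume p: "p \<in> CC"
  interpret S: ring SS by (rule SS_ring)
  have c1: "II +>\<^bsub>RR \<sigma>\<^esub> p \<in> carrier SS" "II +>\<^bsub>RR \<sigma>\<^esub> (\<lambda>\<alpha>. - p \<alpha>) \<in> carrier SS"
    using p CC_neg[OF aut p] by (auto simp: SS_carrier)
  have "(II +>\<^bsub>RR \<sigma>\<^esub> (\<lambda>\<alpha>. - p \<alpha>)) \<oplus>\<^bsub>SS\<^esub> (II +>\<^bsub>RR \<sigma>\<^esub> p) = \<zero>\<^bsub>SS\<^esub>"
    using p CC_neg[OF aut p] by (simp add: SS_add SS_zero)
  then show ?thesis by (rule S.minus_equality[OF _ c1])
qed

lemma skc: "skew_const d = mono d (\<lambda>_. 0)"
  by (simp add: skew_const_def mono_def)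

lemma lc_mono_eq: "lc (mono c \<alpha>) = lc (mono c (alph (deg2 \<alpha>)))"
  by (rule ext) (simp add: lc_mono deg2_alph)

end


context
  fixes \<sigma> :: "'a::division_ring \<Rightarrow> 'a"
  assumes aut: "ring_aut \<sigma>"
  and inf: "infinite_inner_order \<sigma>"
begin

lemma homog_unique:
  assumes hx: "\<forall>b. x * sp \<sigma> k b = \<tau> b * x" and hy: "\<forall>b. y * sp \<sigma> k' b = \<tau> b * y"
    and x: "x \<noteq> 0" and y: "y \<noteq> 0" and kk: "k < k'"
  shows False
proof -
  define n where "n = nat (k' - k)"
  have n: "n > 0" "int n = k' - k" using kk by (auto simp: n_def)
  define c where "c = inverse y * x"
  have c0: "c \<noteq> 0" using x y by (simp add: c_def)
  have ic: "inverse c = inverse x * y" using x y by (simp add: c_def nonzero_inverse_mult_distrib)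
  have "(\<sigma> ^^ n) z = c * z * inverse c" for z
  proof -
    define b where "b = sp \<sigma> (-k) z"
    have b1: "sp \<sigma> k b = z" unfolding b_def using spow_add[OF aut, of k "-k"] spow_0[OF aut]
      by (metis add.right_inverse comp_apply id_apply)
    have b2: "sp \<sigma> k' b = (\<sigma> ^^ n) z"
    proof -
      have "sp \<sigma> k' = sp \<sigma> (int n) \<circ> sp \<sigma> k" using n(2) spow_add[OF aut, of "int n" k] by simp
      then show ?thesis using b1 spow_nat[OF aut] by simp
    qed
    have t: "\<tau> b = x * z * inverse x" using hx[rule_format, of b] b1 x
      by (metis mult.assoc right_inverse mult_1_right)
    have "y * (\<sigma> ^^ n) z = x * z * inverse x * y" using hy[rule_format, of b] b2 t by simp
    then have "inverse y * (y * (\<sigma> ^^ n) z) = inverse y * (x * z * inverse x * y)" by simp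
    then have e: "(\<sigma> ^^ n) z = inverse y * (x * (z * (inverse x * y)))"
      using y by (simp add: mult.assoc[symmetric])
    show ?thesis unfolding ic by (simp add: e c_def mult.assoc)
  qed
  then have "inner_aut (\<sigma> ^^ n)" unfolding inner_aut_def using c0 by blast
  then show False using inf n(1) by (simp add: infinite_inner_order_def)
qed

lemma homog:
  assumes h: "\<forall>k b. f k * sp \<sigma> k b = \<tau> b * f k"
  shows "\<exists>c \<alpha>. \<alpha> \<in> exps 2 \<and> f = lc (mono c \<alpha>)"
proof (cases "\<exists>k. f k \<noteq> 0")
  case True
  then obtain d where d: "f d \<noteq> 0" by blast
  have "f k = 0" if "k \<noteq> d" for k
  proof (rule ccontr)
    assume fk: "f k \<noteq> 0"
    show False
    proof (cases "k < d")
      case True then show ?thesis using homog_unique[of "f k" k \<tau> "f d" d] h fk d by blast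
    next
      case False then have "d < k" using that by simp
      then show ?thesis using homog_unique[of "f d" d \<tau> "f k" k] h fk d by blast
    qed
  qed
  then have "f = lc (mono (f d) (alph d))" by (auto simp: lc_mono deg2_alph)
  then show ?thesis using alph_exps by blast
next
  case False
  then have "f = lc (mono 0 (alph 0))" by (auto simp: lc_mono)
  then show ?thesis using alph_exps by blast
qed

end


definition Hd :: "('a::division_ring \<Rightarrow> 'a) \<Rightarrow> ((nat \<Rightarrow> nat) \<Rightarrow> 'a) set \<Rightarrow> 'a \<Rightarrow> int \<Rightarrow> bool" where
  "Hd \<sigma> Z c d \<longleftrightarrow> (\<exists>\<alpha>. \<alpha> \<in> exps 2 \<and> deg2 \<alpha> = d \<and> Z = II +>\<^bsub>skew_poly_ring [\<sigma>, inv_into UNIV \<sigma>]\<^esub> mono c \<alpha>)"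

context
  fixes \<sigma> :: "'a::division_ring \<Rightarrow> 'a"
  assumes aut: "ring_aut \<sigma>"
begin

lemma sm_mono_mono: assumes "\<alpha> \<in> exps 2" "\<beta> \<in> exps 2"
  shows "sm \<sigma> (mono x \<alpha>) (mono y \<beta>) = mono (x * sp \<sigma> (deg2 \<alpha>) y) (\<lambda>i. \<alpha> i + \<beta> i)"
proof
  fix \<gamma>
  show "sm \<sigma> (mono x \<alpha>) (mono y \<beta>) \<gamma> = mono (x * sp \<sigma> (deg2 \<alpha>) y) (\<lambda>i. \<alpha> i + \<beta> i) \<gamma>"
  proof (cases "\<gamma> = (\<lambda>i. \<alpha> i + \<beta> i)")
    case True
    have e: "(\<lambda>i. \<alpha> i + \<beta> i - \<alpha> i) = \<beta>" by simp
    show ?thesis unfolding True sm_mono_left[OF aut] using assms by (simp add: exps_add le_fun_def e mono_def)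
  next
    case False
    have "(\<lambda>i. \<gamma> i - \<alpha> i) \<noteq> \<beta>" if "\<alpha> \<le> \<gamma>"
    proof
      assume "(\<lambda>i. \<gamma> i - \<alpha> i) = \<beta>"
      then have "\<gamma> = (\<lambda>i. \<alpha> i + \<beta> i)" using that unfolding le_fun_def fun_eq_iff
        by (metis add.commute le_add_diff_inverse2)
      then show False using False by simp
    qed
    then show ?thesis using False unfolding sm_mono_left[OF aut]
      by (auto simp: mono_def rhom_zero[OF sp_rhom[OF aut]])
  qed
qed

lemma Hd_CC: "Hd \<sigma> Z c d \<Longrightarrow> \<exists>\<alpha>. \<alpha> \<in> exps 2 \<and> deg2 \<alpha> = d \<and> mono c \<alpha> \<in> CC \<and> Z = II +>\<^bsub>RR \<sigma>\<^esub> mono c \<alpha>"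
  unfolding Hd_def using mono_CC[OF aut] by blast

lemma Hd_carrier: "Hd \<sigma> Z c d \<Longrightarrow> Z \<in> carrier (SS \<sigma>)"
proof -
  assume "Hd \<sigma> Z c d"
  then obtain \<alpha> where "mono c \<alpha> \<in> CC" "Z = II +>\<^bsub>RR \<sigma>\<^esub> mono c \<alpha>" using Hd_CC by blast
  then show ?thesis unfolding SS_carrier[OF aut] by blast
qed

lemma Hd_mult: assumes "Hd \<sigma> Z c d" "Hd \<sigma> Y c' d'"
  shows "Hd \<sigma> (Z \<otimes>\<^bsub>SS \<sigma>\<^esub> Y) (c * sp \<sigma> d c') (d + d')"
proof -
  obtain \<alpha> where a: "\<alpha> \<in> exps 2" "deg2 \<alpha> = d" "mono c \<alpha> \<in> CC" "Z = II +>\<^bsub>RR \<sigma>\<^esub> mono c \<alpha>"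
    using Hd_CC[OF assms(1)] by blast
  obtain \<beta> where b: "\<beta> \<in> exps 2" "deg2 \<beta> = d'" "mono c' \<beta> \<in> CC" "Y = II +>\<^bsub>RR \<sigma>\<^esub> mono c' \<beta>"
    using Hd_CC[OF assms(2)] by blast
  have "Z \<otimes>\<^bsub>SS \<sigma>\<^esub> Y = II +>\<^bsub>RR \<sigma>\<^esub> mono (c * sp \<sigma> d c') (\<lambda>i. \<alpha> i + \<beta> i)"
    using a b by (simp add: SS_mult[OF aut] sm_mono_mono)
  then show ?thesis unfolding Hd_def using a b by (intro exI[of _ "\<lambda>i. \<alpha> i + \<beta> i"]) (simp add: exps_add deg2_add)
qed

lemma Hd_one: "Hd \<sigma> \<one>\<^bsub>SS \<sigma>\<^esub> 1 0"
  unfolding Hd_def SS_one[OF aut] using zero_exps[OF aut] by (auto simp: deg2_def)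

lemma Hd_pow: assumes "Hd \<sigma> Z c d"
  shows "\<exists>c'. Hd \<sigma> (Z [^]\<^bsub>SS \<sigma>\<^esub> n) c' (int n * d) \<and> (c' = 0 \<longleftrightarrow> (n > 0 \<and> c = 0))"
proof (induction n)
  case 0 then show ?case using Hd_one one_neq_zero by (simp, blast)
next
  case (Suc n)
  then obtain c' where c': "Hd \<sigma> (Z [^]\<^bsub>SS \<sigma>\<^esub> n) c' (int n * d)" "c' = 0 \<longleftrightarrow> (n > 0 \<and> c = 0)" by blast
  have "Hd \<sigma> (Z [^]\<^bsub>SS \<sigma>\<^esub> Suc n) (c' * sp \<sigma> (int n * d) c) (int n * d + d)"
    using Hd_mult[OF c'(1) assms] by simp
  moreover have "int n * d + d = int (Suc n) * d" by (simp add: algebra_simps)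
  moreover have "(c' * sp \<sigma> (int n * d) c = 0) \<longleftrightarrow> (Suc n > 0 \<and> c = 0)"
    using c'(2) by (auto simp: spow_eq0_iff[OF aut])
  ultimately show ?case by metis
qed

lemma Hd_foldr: assumes "\<forall>i\<in>set xs. Hd \<sigma> (a i) (cf i) (df i)"
  shows "\<exists>x. Hd \<sigma> (foldr (\<lambda>i acc. (a i [^]\<^bsub>SS \<sigma>\<^esub> \<beta> i) \<otimes>\<^bsub>SS \<sigma>\<^esub> acc) xs \<one>\<^bsub>SS \<sigma>\<^esub>) x
            (\<Sum>i\<leftarrow>xs. int (\<beta> i) * df i) \<and> (x = 0 \<longleftrightarrow> (\<exists>i\<in>set xs. \<beta> i > 0 \<and> cf i = 0))"
  using assms
proof (induction xs)
  case Nil then show ?case using Hd_one one_neq_zero by (simp, blast)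
next
  case (Cons j xs)
  have pr: "\<forall>i\<in>set xs. Hd \<sigma> (a i) (cf i) (df i)" using Cons.prems by simp
  obtain x where x: "Hd \<sigma> (foldr (\<lambda>i acc. (a i [^]\<^bsub>SS \<sigma>\<^esub> \<beta> i) \<otimes>\<^bsub>SS \<sigma>\<^esub> acc) xs \<one>\<^bsub>SS \<sigma>\<^esub>) x
            (\<Sum>i\<leftarrow>xs. int (\<beta> i) * df i)" "(x = 0 \<longleftrightarrow> (\<exists>i\<in>set xs. \<beta> i > 0 \<and> cf i = 0))"
    using Cons.IH[OF pr] by blast
  have hj: "Hd \<sigma> (a j) (cf j) (df j)" using Cons.prems by simp
  obtain c' where c': "Hd \<sigma> (a j [^]\<^bsub>SS \<sigma>\<^esub> \<beta> j) c' (int (\<beta> j) * df j)" "c' = 0 \<longleftrightarrow> (\<beta> j > 0 \<and> cf j = 0)"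
    using Hd_pow[OF hj, of "\<beta> j"] by blast
  have "Hd \<sigma> (foldr (\<lambda>i acc. (a i [^]\<^bsub>SS \<sigma>\<^esub> \<beta> i) \<otimes>\<^bsub>SS \<sigma>\<^esub> acc) (j # xs) \<one>\<^bsub>SS \<sigma>\<^esub>)
     (c' * sp \<sigma> (int (\<beta> j) * df j) x) (\<Sum>i\<leftarrow>j # xs. int (\<beta> i) * df i)"
    using Hd_mult[OF c'(1) x(1)] by simp
  moreover have "(c' * sp \<sigma> (int (\<beta> j) * df j) x = 0) \<longleftrightarrow> (\<exists>i\<in>set (j # xs). \<beta> i > 0 \<and> cf i = 0)"
    using c'(2) x(2) by (simp add: spow_eq0_iff[OF aut])
  ultimately show ?case by blast
qed

lemma Hd_zero: "Hd \<sigma> Z 0 d \<Longrightarrow> Z = \<zero>\<^bsub>SS \<sigma>\<^esub>"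
proof -
  assume "Hd \<sigma> Z 0 d"
  then obtain \<alpha> where "Z = II +>\<^bsub>RR \<sigma>\<^esub> mono 0 \<alpha>" unfolding Hd_def by blast
  moreover have "mono (0::'a) \<alpha> = (\<lambda>_. 0)" by (simp add: mono_def fun_eq_iff)
  ultimately show ?thesis by (simp add: SS_zero[OF aut])
qed

lemma auto_hom:
  assumes inf: "infinite_inner_order \<sigma>"
    and Z: "Z \<in> carrier (SS \<sigma>)"
    and h: "\<forall>b. Z \<otimes>\<^bsub>SS \<sigma>\<^esub> (II +>\<^bsub>RR \<sigma>\<^esub> skew_const b) = (II +>\<^bsub>RR \<sigma>\<^esub> skew_const (\<tau> b)) \<otimes>\<^bsub>SS \<sigma>\<^esub> Z"
  shows "\<exists>c d. Hd \<sigma> Z c d"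
proof -
  obtain p where p: "p \<in> CC" "Z = II +>\<^bsub>RR \<sigma>\<^esub> p" using Z by (auto simp: SS_carrier[OF aut])
  have z: "(\<lambda>_. 0::nat) \<in> exps 2" by (rule zero_exps[OF aut])
  have d0: "deg2 (\<lambda>_. 0::nat) = 0" by (simp add: deg2_def)
  have "\<forall>k b. lc p k * sp \<sigma> k b = \<tau> b * lc p k"
  proof (intro allI)
    fix k b
    have e1: "Z \<otimes>\<^bsub>SS \<sigma>\<^esub> (II +>\<^bsub>RR \<sigma>\<^esub> skew_const b) = II +>\<^bsub>RR \<sigma>\<^esub> sm \<sigma> p (mono b (\<lambda>_. 0))"
      unfolding p(2) skc[OF aut] by (rule SS_mult[OF aut p(1) mono_CC[OF aut z]])
    have e2: "(II +>\<^bsub>RR \<sigma>\<^esub> skew_const (\<tau> b)) \<otimes>\<^bsub>SS \<sigma>\<^esub> Z = II +>\<^bsub>RR \<sigma>\<^esub> sm \<sigma> (mono (\<tau> b) (\<lambda>_. 0)) p"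
      unfolding p(2) skc[OF aut] by (rule SS_mult[OF aut mono_CC[OF aut z] p(1)])
    have e: "II +>\<^bsub>RR \<sigma>\<^esub> sm \<sigma> p (mono b (\<lambda>_. 0)) = II +>\<^bsub>RR \<sigma>\<^esub> sm \<sigma> (mono (\<tau> b) (\<lambda>_. 0)) p"
      using h[rule_format, of b] e1 e2 by simp
    have "lc (sm \<sigma> p (mono b (\<lambda>_. 0))) k = lc (sm \<sigma> (mono (\<tau> b) (\<lambda>_. 0)) p) k"
      using e coset_eq[OF aut] CC_mult[OF aut] p(1) mono_CC[OF aut z] by blast
    then show "lc p k * sp \<sigma> k b = \<tau> b * lc p k"
      using p(1) by (simp add: lc_sm_mono_left[OF aut z] lc_sm_mono_right[OF aut z] d0 spow_0[OF aut])
  qed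
  then obtain c \<alpha> where ca: "\<alpha> \<in> exps 2" "lc p = lc (mono c \<alpha>)" using homog[OF aut inf] by blast
  then have "Z = II +>\<^bsub>RR \<sigma>\<^esub> mono c \<alpha>" using p coset_eq[OF aut p(1) mono_CC[OF aut ca(1)]] by simp
  then show ?thesis unfolding Hd_def using ca by blast
qed

end


lemma sum_list_zero: "(\<forall>x\<in>set xs. f x = 0) \<Longrightarrow> (\<Sum>x\<leftarrow>xs. f x) = (0::'b::monoid_add)"
  by (induction xs) auto

lemma sum_upt_2: assumes "m \<ge> 2" "\<forall>i\<ge>2. \<beta> i = (0::nat)"
  shows "(\<Sum>i\<leftarrow>[0..<m]. int (\<beta> i) * (d i :: int)) = int (\<beta> 0) * d 0 + int (\<beta> 1) * d 1"
proof -
  have "[0..<m] = 0 # 1 # [2..<m]" using assms(1) by (simp add: upt_conv_Cons numeral_2_eq_2)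
  moreover have "(\<Sum>i\<leftarrow>[2..<m]. int (\<beta> i) * d i) = 0" using assms(2) by (intro sum_list_zero) auto
  ultimately show ?thesis by simp
qed

lemma two_vec: fixes d0 d1 :: int
  shows "\<exists>\<beta> \<beta>' :: nat \<Rightarrow> nat. \<beta> \<noteq> \<beta>' \<and> (\<forall>i\<ge>2. \<beta> i = 0) \<and> (\<forall>i\<ge>2. \<beta>' i = 0) \<and>
     int (\<beta> 0) * d0 + int (\<beta> 1) * d1 = int (\<beta>' 0) * d0 + int (\<beta>' 1) * d1"
proof (cases "d0 = 0")
  case True
  show ?thesis
    by (rule exI[of _ "\<lambda>i. if i = 0 then 1 else 0"], rule exI[of _ "\<lambda>_. 0"]) (auto simp: True fun_eq_iff)
next
  case d0: False
  show ?thesis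
  proof (cases "d1 = 0")
    case True
    show ?thesis
      by (rule exI[of _ "\<lambda>i. if i = 1 then 1 else 0"], rule exI[of _ "\<lambda>_. 0"]) (auto simp: True fun_eq_iff)
  next
    case d1: False
    show ?thesis
    proof (cases "d0 * d1 < 0")
      case True
      have e: "\<bar>d1\<bar> * d0 + \<bar>d0\<bar> * d1 = 0" using True
        by (cases "d0 < 0"; cases "d1 < 0") (auto simp: mult_less_0_iff)
      show ?thesis
        by (rule exI[of _ "\<lambda>i. if i = 0 then nat \<bar>d1\<bar> else if i = 1 then nat \<bar>d0\<bar> else 0"], rule exI[of _ "\<lambda>_. 0"])
           (use d1 e in \<open>auto simp: fun_eq_iff\<close>)
    next
      case False
      then have "d0 * d1 > 0" using d0 d1 by (metis linorder_neqE_linordered_idom mult_eq_0_iff)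
      then have e: "\<bar>d1\<bar> * d0 = \<bar>d0\<bar> * d1"
        by (cases "d0 < 0"; cases "d1 < 0") (auto simp: zero_less_mult_iff)
      show ?thesis
        by (rule exI[of _ "\<lambda>i. if i = 0 then nat \<bar>d1\<bar> else 0"], rule exI[of _ "\<lambda>i. if i = 1 then nat \<bar>d0\<bar> else 0"])
           (use d1 e in \<open>auto simp: fun_eq_iff\<close>)
    qed
  qed
qed


context
  fixes \<sigma> :: "'a::division_ring \<Rightarrow> 'a"
  assumes aut: "ring_aut \<sigma>"
begin

lemma Hd_iota: "Hd \<sigma> (II +>\<^bsub>RR \<sigma>\<^esub> skew_const c) c 0"
  unfolding Hd_def skc[OF aut] using zero_exps[OF aut] by (auto simp: deg2_def)

lemma Hd_add_same: assumes "Hd \<sigma> Z c d" "Hd \<sigma> W c' d"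
  shows "Hd \<sigma> (Z \<oplus>\<^bsub>SS \<sigma>\<^esub> W) (c + c') d"
proof -
  obtain \<alpha> where a: "\<alpha> \<in> exps 2" "deg2 \<alpha> = d" "mono c \<alpha> \<in> CC" "Z = II +>\<^bsub>RR \<sigma>\<^esub> mono c \<alpha>"
    using Hd_CC[OF aut assms(1)] by blast
  obtain \<beta> where b: "\<beta> \<in> exps 2" "deg2 \<beta> = d" "mono c' \<beta> \<in> CC" "W = II +>\<^bsub>RR \<sigma>\<^esub> mono c' \<beta>"
    using Hd_CC[OF aut assms(2)] by blast
  have s: "Z \<oplus>\<^bsub>SS \<sigma>\<^esub> W = II +>\<^bsub>RR \<sigma>\<^esub> (\<lambda>\<gamma>. mono c \<alpha> \<gamma> + mono c' \<beta> \<gamma>)"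
    using a b by (simp add: SS_add[OF aut])
  have cc: "(\<lambda>\<gamma>. mono c \<alpha> \<gamma> + mono c' \<beta> \<gamma>) \<in> CC" by (rule CC_add[OF aut a(3) b(3)])
  have "lc (\<lambda>\<gamma>. mono c \<alpha> \<gamma> + mono c' \<beta> \<gamma>) k = lc (mono (c + c') \<alpha>) k" for k
    using a b by (simp add: lc_add[OF aut a(3) b(3)] lc_mono)
  then have "Z \<oplus>\<^bsub>SS \<sigma>\<^esub> W = II +>\<^bsub>RR \<sigma>\<^esub> mono (c + c') \<alpha>"
    using s coset_eq[OF aut cc mono_CC[OF aut a(1)]] by simp
  then show ?thesis unfolding Hd_def using a by blast
qed

lemma finsum_RR: "finite G \<Longrightarrow> (\<forall>g\<in>G. f g \<in> CC) \<Longrightarrow> finsum (RR \<sigma>) f G = (\<lambda>\<alpha>. \<Sum>g\<in>G. f g \<alpha>)"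
proof (induction G rule: finite_induct)
  case empty
  interpret R: ring "RR \<sigma>" by (rule RRr[OF aut])
  show ?case by (simp add: RR_zero[OF aut])
next
  case (insert x F)
  interpret R: ring "RR \<sigma>" by (rule RRr[OF aut])
  have "f \<in> F \<rightarrow> carrier (RR \<sigma>)" "f x \<in> carrier (RR \<sigma>)" using insert.prems by (auto simp: RR_carrier[OF aut])
  then show ?case using insert by (simp add: R.finsum_insert RR_add[OF aut])
qed


lemma dep_case:
  assumes ind: "left_alg_indep (SS \<sigma>) (\<lambda>d. II +>\<^bsub>RR \<sigma>\<^esub> skew_const d) m a"
    and m: "m \<ge> 2" and H: "\<forall>i<m. Hd \<sigma> (a i) (cf i) (df i)"
  shows False
proof -
  interpret S: ring "SS \<sigma>" by (rule SS_ring[OF aut])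
  define \<iota> where "\<iota> = (\<lambda>d. II +>\<^bsub>RR \<sigma>\<^esub> skew_const d)"
  define mon where "mon = monom_in (SS \<sigma>) a m"
  have mon: "\<exists>x. Hd \<sigma> (mon \<beta>) x (\<Sum>i\<leftarrow>[0..<m]. int (\<beta> i) * df i) \<and>
       (x = 0 \<longleftrightarrow> (\<exists>i\<in>set [0..<m]. 0 < \<beta> i \<and> cf i = 0))" for \<beta>
    unfolding mon_def monom_in_def by (rule Hd_foldr[OF aut]) (use H in auto)
  have iota_c: "\<iota> c \<in> carrier (SS \<sigma>)" for c unfolding \<iota>_def by (rule Hd_carrier[OF aut Hd_iota])
  have mon_c: "mon \<beta> \<in> carrier (SS \<sigma>)" for \<beta> using mon[of \<beta>] Hd_carrier[OF aut] by blast
  have fc: "(\<lambda>\<beta>. \<iota> (c \<beta>) \<otimes>\<^bsub>SS \<sigma>\<^esub> mon \<beta>) \<in> B \<rightarrow> carrier (SS \<sigma>)" for c B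
    using iota_c mon_c by auto
  have indD: "c \<beta> = 0" if "finite B" "B \<subseteq> exps m"
      "finsum (SS \<sigma>) (\<lambda>\<beta>. \<iota> (c \<beta>) \<otimes>\<^bsub>SS \<sigma>\<^esub> mon \<beta>) B = \<zero>\<^bsub>SS \<sigma>\<^esub>" "\<beta> \<in> B" for B c \<beta>
    using ind that unfolding left_alg_indep_def \<iota>_def mon_def by blast
  show False
  proof (cases "cf 0 = 0 \<or> cf 1 = 0")
    case True
    then obtain j where j: "j < 2" "cf j = 0" by (metis less_2_cases_iff One_nat_def)
    define \<beta> where "\<beta> = (\<lambda>i. if i = j then 1::nat else 0)"
    have be: "\<beta> \<in> exps m" using j m by (auto simp: \<beta>_def exps_def)
    obtain x where x: "Hd \<sigma> (mon \<beta>) x (\<Sum>i\<leftarrow>[0..<m]. int (\<beta> i) * df i)"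
        "x = 0 \<longleftrightarrow> (\<exists>i\<in>set [0..<m]. 0 < \<beta> i \<and> cf i = 0)" using mon by blast
    have "x = 0" using x(2) j m by (auto simp: \<beta>_def intro!: bexI[of _ j])
    then have m0: "mon \<beta> = \<zero>\<^bsub>SS \<sigma>\<^esub>" using x(1) Hd_zero[OF aut] by blast
    have "finsum (SS \<sigma>) (\<lambda>\<beta>. \<iota> ((\<lambda>_. 1) \<beta>) \<otimes>\<^bsub>SS \<sigma>\<^esub> mon \<beta>) {\<beta>} = \<iota> 1 \<otimes>\<^bsub>SS \<sigma>\<^esub> mon \<beta>"
      using fc iota_c mon_c by (simp add: S.finsum_insert)
    also have "\<dots> = \<zero>\<^bsub>SS \<sigma>\<^esub>" using m0 iota_c by simp
    finally have "(\<lambda>_. 1::'a) \<beta> = 0" using indD[of "{\<beta>}" "\<lambda>_. 1" \<beta>] be by simp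
    then show False by simp
  next
    case False
    obtain \<beta> \<beta>' :: "nat \<Rightarrow> nat" where bb: "\<beta> \<noteq> \<beta>'" "\<forall>i\<ge>2. \<beta> i = 0" "\<forall>i\<ge>2. \<beta>' i = 0"
      "int (\<beta> 0) * df 0 + int (\<beta> 1) * df 1 = int (\<beta>' 0) * df 0 + int (\<beta>' 1) * df 1"
      using two_vec[of "df 0" "df 1"] by blast
    have be: "\<beta> \<in> exps m" "\<beta>' \<in> exps m" using bb m by (auto simp: exps_def)
    define D where "D = int (\<beta> 0) * df 0 + int (\<beta> 1) * df 1"
    have nz: "\<not> (\<exists>i\<in>set [0..<m]. 0 < \<gamma> i \<and> cf i = 0)" if "\<forall>i\<ge>2. \<gamma> i = 0" for \<gamma> :: "nat \<Rightarrow> nat"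
    proof
      assume "\<exists>i\<in>set [0..<m]. 0 < \<gamma> i \<and> cf i = 0"
      then obtain i where "0 < \<gamma> i" "cf i = 0" by blast
      moreover have "i < 2"
      proof (rule ccontr)
        assume "\<not> i < 2" then have "\<gamma> i = 0" using that by simp
        then show False using \<open>0 < \<gamma> i\<close> by simp
      qed
      ultimately show False using False by (auto simp: less_2_cases_iff)
    qed
    obtain x where x: "Hd \<sigma> (mon \<beta>) x D" "x \<noteq> 0"
      using mon[of \<beta>] nz[OF bb(2)] sum_upt_2[OF m bb(2)] by (auto simp: D_def)
    obtain y where y: "Hd \<sigma> (mon \<beta>') y D" "y \<noteq> 0"
      using mon[of \<beta>'] nz[OF bb(3)] sum_upt_2[OF m bb(3)] bb(4) by (auto simp: D_def)
    define cc where "cc = (\<lambda>\<gamma>. if \<gamma> = \<beta> then 1 else - (x * inverse y))"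
    define f where "f = (\<lambda>\<beta>. \<iota> (cc \<beta>) \<otimes>\<^bsub>SS \<sigma>\<^esub> mon \<beta>)"
    have s0: "sp \<sigma> 0 = id" by (rule spow_0[OF aut])
    have f1: "Hd \<sigma> (f \<beta>) x D"
      using Hd_mult[OF aut Hd_iota[of 1] x(1)] by (simp add: f_def cc_def \<iota>_def s0)
    have f2: "Hd \<sigma> (f \<beta>') (- x) D"
    proof -
      have "Hd \<sigma> (f \<beta>') (- (x * inverse y) * y) D"
        using Hd_mult[OF aut Hd_iota[of "- (x * inverse y)"] y(1)] bb(1) by (simp add: f_def cc_def \<iota>_def s0)
      moreover have "- (x * inverse y) * y = - x" using y(2) by (simp add: mult.assoc)
      ultimately show ?thesis by simp
    qed
    have "f \<beta> \<oplus>\<^bsub>SS \<sigma>\<^esub> f \<beta>' = \<zero>\<^bsub>SS \<sigma>\<^esub>"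
      using Hd_add_same[OF f1 f2] Hd_zero[OF aut] by simp
    moreover have "finsum (SS \<sigma>) f {\<beta>, \<beta>'} = f \<beta> \<oplus>\<^bsub>SS \<sigma>\<^esub> f \<beta>'"
    proof -
      have fcc: "f \<in> B \<rightarrow> carrier (SS \<sigma>)" for B using fc unfolding f_def by blast
      have "f \<gamma> \<in> carrier (SS \<sigma>)" for \<gamma> using fcc[of UNIV] by auto
      then show ?thesis using bb(1) fcc by (simp add: S.finsum_insert)
    qed
    ultimately have "cc \<beta> = 0" using indD[of "{\<beta>, \<beta>'}" cc \<beta>] be unfolding f_def by simp
    then show False by (simp add: cc_def)
  qed
qed

end


context
  fixes \<sigma> :: "'a::division_ring \<Rightarrow> 'a"
  assumes aut: "ring_aut \<sigma>"
begin

lemma gen_case: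
  fixes m :: nat and df :: "nat \<Rightarrow> int"
  assumes m: "m \<le> 1" and H: "\<forall>i<m. Hd \<sigma> (a i) (cf i) (df i)"
    and fg: "fin_gen_left_module (SS \<sigma>)
       (generate_ring (SS \<sigma>) (range (\<lambda>d. II +>\<^bsub>RR \<sigma>\<^esub> skew_const d) \<union> a ` {..<m}))"
  shows False
proof -
  interpret S: ring "SS \<sigma>" by (rule SS_ring[OF aut])
  define d where "d = (if m = 1 then df 0 else 0)"
  define T where "T = {Z. \<exists>p\<in>CC. Z = II +>\<^bsub>RR \<sigma>\<^esub> p \<and> (\<forall>\<alpha>. p \<alpha> \<noteq> 0 \<longrightarrow> (\<exists>j::nat. deg2 \<alpha> = int j * d))}"
  define A where "A = generate_ring (SS \<sigma>) (range (\<lambda>d. II +>\<^bsub>RR \<sigma>\<^esub> skew_const d) \<union> a ` {..<m})"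
  have z: "(\<lambda>_. 0::nat) \<in> exps 2" by (rule zero_exps[OF aut])
  have d0: "deg2 (\<lambda>_. 0::nat) = 0" by (simp add: deg2_def)
  have monoT: "II +>\<^bsub>RR \<sigma>\<^esub> mono c \<alpha> \<in> T" if "\<alpha> \<in> exps 2" "deg2 \<alpha> = int j * d" for c \<alpha> j
    unfolding T_def using that mono_CC[OF aut that(1)]
    by (intro CollectI bexI[of _ "mono c \<alpha>"] conjI) (auto simp: mono_def split: if_splits)
  have AT: "A \<subseteq> T"
  proof
    fix h assume "h \<in> A"
    then show "h \<in> T" unfolding A_def
    proof (induction rule: generate_ring.induct)
      case one
      show ?case unfolding SS_one[OF aut] using monoT[OF z, of 0] d0 by simp
    next
      case (incl h)
      then show ?case
      proof
        assume "h \<in> range (\<lambda>d. II +>\<^bsub>RR \<sigma>\<^esub> skew_const d)"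
        then obtain b where "h = II +>\<^bsub>RR \<sigma>\<^esub> mono b (\<lambda>_. 0)" by (auto simp: skc[OF aut])
        then show ?thesis using monoT[OF z, of 0] d0 by simp
      next
        assume "h \<in> a ` {..<m}"
        then obtain i where i: "i < m" "h = a i" by auto
        then have "i = 0" "m = 1" using m by auto
        then obtain \<alpha> where "\<alpha> \<in> exps 2" "deg2 \<alpha> = df 0" "h = II +>\<^bsub>RR \<sigma>\<^esub> mono (cf 0) \<alpha>"
          using H i unfolding Hd_def by auto
        then show ?thesis using monoT[of \<alpha> 1] \<open>m = 1\<close> by (simp add: d_def)
      qed
    next
      case (a_inv h)
      then obtain p where p: "p \<in> CC" "h = II +>\<^bsub>RR \<sigma>\<^esub> p" "\<forall>\<alpha>. p \<alpha> \<noteq> 0 \<longrightarrow> (\<exists>j::nat. deg2 \<alpha> = int j * d)"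
        unfolding T_def by blast
      then show ?case unfolding T_def using SS_neg[OF aut p(1)] CC_neg[OF aut p(1)] by auto
    next
      case (eng_add h1 h2)
      then obtain p q where p: "p \<in> CC" "h1 = II +>\<^bsub>RR \<sigma>\<^esub> p" "\<forall>\<alpha>. p \<alpha> \<noteq> 0 \<longrightarrow> (\<exists>j::nat. deg2 \<alpha> = int j * d)"
        and q: "q \<in> CC" "h2 = II +>\<^bsub>RR \<sigma>\<^esub> q" "\<forall>\<alpha>. q \<alpha> \<noteq> 0 \<longrightarrow> (\<exists>j::nat. deg2 \<alpha> = int j * d)"
        unfolding T_def by blast
      have "h1 \<oplus>\<^bsub>SS \<sigma>\<^esub> h2 = II +>\<^bsub>RR \<sigma>\<^esub> (\<lambda>\<alpha>. p \<alpha> + q \<alpha>)" using p q by (simp add: SS_add[OF aut])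
      moreover have "(\<lambda>\<alpha>. p \<alpha> + q \<alpha>) \<in> CC" by (rule CC_add[OF aut p(1) q(1)])
      moreover have "\<forall>\<alpha>. p \<alpha> + q \<alpha> \<noteq> 0 \<longrightarrow> (\<exists>j::nat. deg2 \<alpha> = int j * d)"
        using p(3) q(3) by (metis add.right_neutral add_0)
      ultimately show ?case unfolding T_def by blast
    next
      case (eng_mult h1 h2)
      then obtain p q where p: "p \<in> CC" "h1 = II +>\<^bsub>RR \<sigma>\<^esub> p" "\<forall>\<alpha>. p \<alpha> \<noteq> 0 \<longrightarrow> (\<exists>j::nat. deg2 \<alpha> = int j * d)"
        and q: "q \<in> CC" "h2 = II +>\<^bsub>RR \<sigma>\<^esub> q" "\<forall>\<alpha>. q \<alpha> \<noteq> 0 \<longrightarrow> (\<exists>j::nat. deg2 \<alpha> = int j * d)"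
        unfolding T_def by blast
      have "h1 \<otimes>\<^bsub>SS \<sigma>\<^esub> h2 = II +>\<^bsub>RR \<sigma>\<^esub> sm \<sigma> p q" using p q by (simp add: SS_mult[OF aut])
      moreover have "sm \<sigma> p q \<in> CC" by (rule CC_mult[OF aut p(1) q(1)])
      moreover have "\<exists>j::nat. deg2 \<alpha> = int j * d" if hh: "sm \<sigma> p q \<alpha> \<noteq> 0" for \<alpha>
      proof -
        obtain \<alpha>' where a: "\<alpha>' \<le> \<alpha>" "p \<alpha>' \<noteq> 0" "q (\<lambda>i. \<alpha> i - \<alpha>' i) \<noteq> 0"
          using sm_support[OF aut hh] by blast
        obtain j1 j2 :: nat where "deg2 \<alpha>' = int j1 * d" "deg2 (\<lambda>i. \<alpha> i - \<alpha>' i) = int j2 * d"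
          using p(3) q(3) a by blast
        then have "deg2 \<alpha> = int (j1 + j2) * d" using deg2_diff[OF a(1)] by (simp add: algebra_simps)
        then show ?thesis by blast
      qed
      ultimately show ?case unfolding T_def by blast
    qed
  qed
  obtain G where G: "finite G" "G \<subseteq> carrier (SS \<sigma>)"
    "\<forall>s\<in>carrier (SS \<sigma>). \<exists>c. (\<forall>g\<in>G. c g \<in> A) \<and> s = finsum (SS \<sigma>) (\<lambda>g. c g \<otimes>\<^bsub>SS \<sigma>\<^esub> g) G"
    using fg unfolding fin_gen_left_module_def A_def by blast
  have "\<forall>g\<in>G. \<exists>q. q \<in> CC \<and> g = II +>\<^bsub>RR \<sigma>\<^esub> q" using G(2) by (auto simp: SS_carrier[OF aut])
  from bchoice[OF this] obtain Q where Q: "\<forall>g\<in>G. Q g \<in> CC \<and> g = II +>\<^bsub>RR \<sigma>\<^esub> Q g" by blast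
  define F where "F = (\<Union>g\<in>G. {\<alpha>. Q g \<alpha> \<noteq> 0})"
  have fF: "finite F" unfolding F_def using G(1) Q by (auto simp: CC_fin[OF aut])
  define N where "N = Max (insert 0 ((\<lambda>\<alpha>. \<bar>deg2 \<alpha>\<bar>) ` F))"
  have N: "\<bar>deg2 \<alpha>\<bar> \<le> N" if "\<alpha> \<in> F" for \<alpha> unfolding N_def
    by (rule Max_ge) (use fF that in auto)
  define k0 where "k0 = (if d \<ge> 0 then - (N + 1) else N + 1)"
  define s where "s = II +>\<^bsub>RR \<sigma>\<^esub> mono 1 (alph k0)"
  have sC: "mono 1 (alph k0) \<in> CC" by (rule mono_CC[OF aut alph_exps])
  then have "s \<in> carrier (SS \<sigma>)" unfolding s_def SS_carrier[OF aut] by (rule imageI)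
  from G(3)[rule_format, OF this] obtain c where c: "\<forall>g\<in>G. c g \<in> A" "s = finsum (SS \<sigma>) (\<lambda>g. c g \<otimes>\<^bsub>SS \<sigma>\<^esub> g) G"
    by blast
  have "\<forall>g\<in>G. \<exists>p. p \<in> CC \<and> c g = II +>\<^bsub>RR \<sigma>\<^esub> p \<and> (\<forall>\<alpha>. p \<alpha> \<noteq> 0 \<longrightarrow> (\<exists>j::nat. deg2 \<alpha> = int j * d))"
  proof
    fix g assume "g \<in> G"
    then have "c g \<in> T" using c(1) AT by blast
    then obtain p where "p \<in> CC" "c g = II +>\<^bsub>RR \<sigma>\<^esub> p" "\<forall>\<alpha>. p \<alpha> \<noteq> 0 \<longrightarrow> (\<exists>j::nat. deg2 \<alpha> = int j * d)"
      unfolding T_def by (auto simp only: mem_Collect_eq)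
    then show "\<exists>p. p \<in> CC \<and> c g = II +>\<^bsub>RR \<sigma>\<^esub> p \<and> (\<forall>\<alpha>. p \<alpha> \<noteq> 0 \<longrightarrow> (\<exists>j::nat. deg2 \<alpha> = int j * d))"
      by (intro exI[of _ p]) simp
  qed
  then obtain P where P: "\<forall>g\<in>G. P g \<in> CC \<and> c g = II +>\<^bsub>RR \<sigma>\<^esub> P g \<and> (\<forall>\<alpha>. P g \<alpha> \<noteq> 0 \<longrightarrow> (\<exists>j::nat. deg2 \<alpha> = int j * d))"
    by (rule bchoice[THEN exE]) (rule that)
  define f where "f = (\<lambda>g. sm \<sigma> (P g) (Q g))"
  have fCC: "\<forall>g\<in>G. f g \<in> CC" using P Q by (simp add: f_def CC_mult[OF aut])
  have "finsum (SS \<sigma>) (\<lambda>g. c g \<otimes>\<^bsub>SS \<sigma>\<^esub> g) G = finsum (SS \<sigma>) ((\<lambda>x. II +>\<^bsub>RR \<sigma>\<^esub> x) \<circ> f) G"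
  proof (rule S.finsum_cong')
    show "(\<lambda>x. II +>\<^bsub>RR \<sigma>\<^esub> x) \<circ> f \<in> G \<rightarrow> carrier (SS \<sigma>)" using fCC by (auto simp: SS_carrier[OF aut])
    fix g assume "g \<in> G"
    then show "c g \<otimes>\<^bsub>SS \<sigma>\<^esub> g = ((\<lambda>x. II +>\<^bsub>RR \<sigma>\<^esub> x) \<circ> f) g"
    proof -
      have "c g = II +>\<^bsub>RR \<sigma>\<^esub> P g" "g = II +>\<^bsub>RR \<sigma>\<^esub> Q g" "P g \<in> CC" "Q g \<in> CC"
        using P Q \<open>g \<in> G\<close> by auto
      then show ?thesis using SS_mult[OF aut, of "P g" "Q g"] by (simp add: f_def)
    qed
  qed simp
  also have "\<dots> = II +>\<^bsub>RR \<sigma>\<^esub> finsum (RR \<sigma>) f G"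
    using ring_hom_ring.hom_finsum[OF ideal.rcos_ring_hom_ring[OF IIi[OF aut]], of f G] fCC
    by (auto simp: RR_carrier[OF aut])
  also have "finsum (RR \<sigma>) f G = (\<lambda>\<alpha>. \<Sum>g\<in>G. f g \<alpha>)" by (rule finsum_RR[OF aut G(1) fCC])
  finally have eq: "s = II +>\<^bsub>RR \<sigma>\<^esub> (\<lambda>\<alpha>. \<Sum>g\<in>G. f g \<alpha>)" using c(2) by simp
  have "lc (mono 1 (alph k0)) k0 = lc (\<lambda>\<alpha>. \<Sum>g\<in>G. f g \<alpha>) k0"
    using eq coset_eq[OF aut sC CC_sum[OF aut G(1)]] fCC unfolding s_def by blast
  also have "\<dots> = (\<Sum>g\<in>G. lc (f g) k0)" using lc_sum[OF aut G(1)] fCC by blast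
  also have "\<dots> = 0"
  proof (rule sum.neutral, rule ballI)
    fix g assume g: "g \<in> G"
    have "deg2 \<alpha> \<noteq> k0" if hh: "f g \<alpha> \<noteq> 0" for \<alpha>
    proof -
      obtain \<alpha>' where a: "\<alpha>' \<le> \<alpha>" "P g \<alpha>' \<noteq> 0" "Q g (\<lambda>i. \<alpha> i - \<alpha>' i) \<noteq> 0"
        using sm_support[OF aut hh[unfolded f_def]] by blast
      obtain j :: nat where j: "deg2 \<alpha>' = int j * d" using P g a by blast
      have "(\<lambda>i. \<alpha> i - \<alpha>' i) \<in> F" using a g by (auto simp: F_def)
      then have b: "\<bar>deg2 (\<lambda>i. \<alpha> i - \<alpha>' i)\<bar> \<le> N" by (rule N)
      have e: "deg2 \<alpha> = int j * d + deg2 (\<lambda>i. \<alpha> i - \<alpha>' i)" using deg2_diff[OF a(1)] j by simp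
      show ?thesis
      proof (cases "d \<ge> 0")
        case True
        then have "int j * d \<ge> 0" by simp
        then have "deg2 \<alpha> \<ge> - N" using e b by linarith
        then show ?thesis using True by (simp add: k0_def)
      next
        case False
        then have "int j * d \<le> 0" by (simp add: mult_nonneg_nonpos)
        then have "deg2 \<alpha> \<le> N" using e b by linarith
        then show ?thesis using False by (simp add: k0_def)
      qed
    qed
    then have "{\<alpha>. f g \<alpha> \<noteq> 0 \<and> deg2 \<alpha> = k0} = {}" by blast
    then show "lc (f g) k0 = 0" unfolding lc_def by (simp only: sum.empty)
  qed
  finally show False by (simp add: lc_mono deg2_alph)
qed

end


theorem proposition5p7:
  fixes \<sigma> :: "'a::division_ring \<Rightarrow> 'a"
  assumes "ring_aut \<sigma>"
    and "infinite_inner_order \<sigma>"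
  shows "\<not> tuple_aut_normalizable [\<sigma>, inv_into UNIV \<sigma>]"
proof
  note aut = assms(1)
  assume tn: "tuple_aut_normalizable [\<sigma>, inv_into UNIV \<sigma>]"
  have "aut_normalizable (SS \<sigma>) (\<lambda>d. II +>\<^bsub>RR \<sigma>\<^esub> skew_const d)"
    using tn II_ideal[OF aut] II_proper[OF aut] unfolding tuple_aut_normalizable_def by blast
  then obtain m a \<tau> where
    ac: "\<forall>i<m. a i \<in> carrier (SS \<sigma>)" and
    au: "\<forall>i<m. automorphic_over (SS \<sigma>) (\<lambda>d. II +>\<^bsub>RR \<sigma>\<^esub> skew_const d) (a i) (\<tau> i)" and
    ind: "left_alg_indep (SS \<sigma>) (\<lambda>d. II +>\<^bsub>RR \<sigma>\<^esub> skew_const d) m a" and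
    fg: "fin_gen_left_module (SS \<sigma>) (generate_ring (SS \<sigma>) (range (\<lambda>d. II +>\<^bsub>RR \<sigma>\<^esub> skew_const d) \<union> a ` {..<m}))"
    unfolding aut_normalizable_def by blast
  have "\<forall>i<m. \<exists>c d. Hd \<sigma> (a i) c d"
  proof (intro allI impI)
    fix i assume "i < m"
    then show "\<exists>c d. Hd \<sigma> (a i) c d"
      using auto_hom[OF aut assms(2), of "a i" "\<tau> i"] ac au unfolding automorphic_over_def by blast
  qed
  then have "\<forall>i. \<exists>c d. i < m \<longrightarrow> Hd \<sigma> (a i) c d" by blast
  then obtain cf where "\<forall>i. \<exists>d. i < m \<longrightarrow> Hd \<sigma> (a i) (cf i) d" by metis
  then obtain df where H: "\<forall>i. i < m \<longrightarrow> Hd \<sigma> (a i) (cf i) (df i)" by metis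
  show False
  proof (cases "m \<ge> 2")
    case True
    show False by (rule dep_case[OF aut ind True, of cf df]) (use H in blast)
  next
    case False
    then have "m \<le> 1" by simp
    show False by (rule gen_case[OF aut \<open>m \<le> 1\<close> _ fg, of cf df]) (use H in blast)
  qed
qed


end
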